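(* Fix $\kappa\in\mathbb{R}$; if $\kappa\neq0$ let $k>0$ with $|\kappa|=4k^2$. Set $I=(0,\frac{\pi}{k})$ if $\kappa>0$ and $I=(0,\infty)$ otherwise. Let $G$ be the model space corresponding to $\kappa$ (as described in the context) with left-invariant orthonormal frame $(X_1,X_2)$ of the contact distribution, and consider the embedded surface $$S=\{\exp(r\cos\theta\,X_1+r\sin\theta\,X_2): r\in I,\ \theta\in[0,2\pi)\}.$$ Then in the coordinates $(r,\theta)$ the limiting operator $\Delta_0=\widehat{X}_S^2+b\,\widehat{X}_S$ on $S$ is $$\Delta_0=\frac{\partial^2}{\partial r^2}+b(r)\frac{\partial}{\partial r},\qquad b(r)=\begin{cases}2k\cot(kr)&\text{if }\kappa=4k^2,\\ \frac{2}{r}&\text{if }\kappa=0,\\ 2k\coth(kr)&\text{if }\kappa=-4k^2.\end{cases}$$ Consequently, the stochastic process induced by $\frac12\Delta_0$, moving along the leaves of the characteristic foliation of $S$ (the curves $\theta=\mathrm{const}$), is a Bessel process of order $3$ if $\kappa=0$, a Legendre process of order $3$ (on $(0,\pi/k)$) if $\kappa>0$, and a hyperbolic Bessel process of order $3$ if $\kappa<0$.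
   Context: General setting: for a three-dimensional contact sub-Riemannian manifold $(M,D,g)$ with contact form $\omega$ normalised by ${\mathrm d}\omega|_D=-\operatorname{vol}_g$, Reeb field $X_0$ (${\mathrm d}\omega(X_0,\cdot)=0$, $\omega(X_0)=1$), global oriented orthonormal frame $(X_1,X_2)$ of $D$, and a surface $S=\{u=0\}$ with $u\in C^2$, ${\mathrm d}u\ne0$ on $S$, the characteristic set is $\Gamma(S)=\{X_1u=X_2u=0\}$, and on $S\setminus\Gamma(S)$ one sets $\widehat{X}_S=\frac{(X_2u)X_1-(X_1u)X_2}{\sqrt{(X_1u)^2+(X_2u)^2}}$ and $b=\frac{X_0u}{\sqrt{(X_1u)^2+(X_2u)^2}}$ (these depend only on $S$, up to the choice of sign of $u$, and $\Delta_0$ does not depend on this choice). Model spaces: $G$ is a three-dimensional Lie group with contact sub-Riemannian structure whose distribution is spanned by left-invariant $g$-orthonormal vector fields $X_1,X_2$ with Reeb vector field $X_0$ satisfying $[X_1,X_2]=X_0$, $[X_0,X_1]=\kappa X_2$, $[X_0,X_2]=-\kappa X_1$. For $\kappa=0$: the Heisenberg group $\mathbb{R}^3$ with law $(x_1,y_1,z_1)*(x_2,y_2,z_2)=(x_1+x_2,y_1+y_2,z_1+z_2+\frac12(x_1y_2-x_2y_1))$, $X_1=\partial_x-\frac y2\partial_z$, $X_2=\partial_y+\frac x2\partial_z$. For $\kappa=4k^2$: ${\rm SU}(2)$ with $X_1,X_2$ the left-invariant vector fields corresponding to $k\,i\sigma_1$ and $k\,i\sigma_2$ ($\sigma_1,\sigma_2$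 Pauli matrices). For $\kappa=-4k^2$: ${\rm SL}(2,\mathbb{R})$ with $X_1,X_2$ the left-invariant vector fields corresponding to $k\begin{pmatrix}1&0\\0&-1\end{pmatrix}$ and $k\begin{pmatrix}0&1\\1&0\end{pmatrix}$. In each case $\exp$ is the group exponential, identifying a left-invariant vector field with its value at the identity. The Bessel process of order $3$, Legendre process of order $3$ and hyperbolic Bessel process of order $3$ are the diffusions with generators $\frac12\frac{d^2}{dr^2}+\frac1r\frac{d}{dr}$ on $(0,\infty)$, $\frac12\frac{d^2}{dr^2}+k\cot(kr)\frac{d}{dr}$ on $(0,\pi/k)$, and $\frac12\frac{d^2}{dr^2}+k\coth(kr)\frac{d}{dr}$ on $(0,\infty)$, respectively. *)

theory Defs
  imports "HOL-Analysis.Analysis"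
begin

section \<open>Generic Lie-group calculus on an ambient real normed vector space\<close>

text \<open>A group is given by its multiplication gmul (defined on the whole ambient
 space 'g) and its identity e; the Lie algebra is identified with the tangent
 space at e, i.e. with vectors of 'g.\<close>

definition one_param_subgroup ::
  "('g::real_normed_vector \<Rightarrow> 'g \<Rightarrow> 'g) \<Rightarrow> 'g \<Rightarrow> 'g \<Rightarrow> (real \<Rightarrow> 'g) \<Rightarrow> bool" where
  "one_param_subgroup gmul e A \<gamma> \<longleftrightarrow>
     \<gamma> 0 = e \<and> (\<forall>s t. \<gamma> (s + t) = gmul (\<gamma> s) (\<gamma> t)) \<and> (\<gamma> has_vector_derivative A) (at 0)"

text \<open>Group exponential: value at time 1 of the one-parameter subgroup with initial velocity A.\<close>
definition gexp :: "('g::real_normed_vector \<Rightarrow> 'g \<Rightarrow> 'g) \<Rightarrow> 'g \<Rightarrow> 'g \<Rightarrow> 'g" where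
  "gexp gmul e A = (THE \<gamma>. one_param_subgroup gmul e A \<gamma>) 1"

text \<open>Left-invariant vector field with value A at e, acting on functions.\<close>
definition lvf :: "('g::real_normed_vector \<Rightarrow> 'g \<Rightarrow> 'g) \<Rightarrow> 'g \<Rightarrow> 'g \<Rightarrow> ('g \<Rightarrow> real) \<Rightarrow> 'g \<Rightarrow> real" where
  "lvf gmul e A f p = deriv (\<lambda>t. f (gmul p (gexp gmul e (t *\<^sub>R A)))) 0"

text \<open>Reeb field X0 = [X1,X2].\<close>
definition reeb :: "('g::real_normed_vector \<Rightarrow> 'g \<Rightarrow> 'g) \<Rightarrow> 'g \<Rightarrow> 'g \<Rightarrow> 'g \<Rightarrow> ('g \<Rightarrow> real) \<Rightarrow> 'g \<Rightarrow> real" where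
  "reeb gmul e A1 A2 f p = lvf gmul e A1 (lvf gmul e A2 f) p - lvf gmul e A2 (lvf gmul e A1 f) p"

text \<open>Twice continuously (Frechet) differentiable real functions on the ambient space.\<close>
definition C2 :: "('g::real_normed_vector \<Rightarrow> real) \<Rightarrow> bool" where
  "C2 f \<longleftrightarrow> (\<exists>(Df :: 'g \<Rightarrow> 'g \<Rightarrow>\<^sub>L real) (D2f :: 'g \<Rightarrow> 'g \<Rightarrow>\<^sub>L ('g \<Rightarrow>\<^sub>L real)).
      (\<forall>x. (f has_derivative blinfun_apply (Df x)) (at x)) \<and>
      (\<forall>x. (Df has_derivative blinfun_apply (D2f x)) (at x)) \<and>
      continuous_on UNIV D2f)"

section \<open>The operators \<open>\<widehat>X_S\<close>, b and \<open>\<Delta>\<^sub>0\<close> attached to S = {u = 0}\<close>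

definition hnorm :: "('g::real_normed_vector \<Rightarrow> 'g \<Rightarrow> 'g) \<Rightarrow> 'g \<Rightarrow> 'g \<Rightarrow> 'g \<Rightarrow> ('g \<Rightarrow> real) \<Rightarrow> 'g \<Rightarrow> real" where
  "hnorm gmul e A1 A2 u p = sqrt ((lvf gmul e A1 u p)\<^sup>2 + (lvf gmul e A2 u p)\<^sup>2)"

definition Xhat :: "('g::real_normed_vector \<Rightarrow> 'g \<Rightarrow> 'g) \<Rightarrow> 'g \<Rightarrow> 'g \<Rightarrow> 'g \<Rightarrow> ('g \<Rightarrow> real) \<Rightarrow> ('g \<Rightarrow> real) \<Rightarrow> 'g \<Rightarrow> real" where
  "Xhat gmul e A1 A2 u g p =
     (lvf gmul e A2 u p * lvf gmul e A1 g p - lvf gmul e A1 u p * lvf gmul e A2 g p) / hnorm gmul e A1 A2 u p"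

definition bS :: "('g::real_normed_vector \<Rightarrow> 'g \<Rightarrow> 'g) \<Rightarrow> 'g \<Rightarrow> 'g \<Rightarrow> 'g \<Rightarrow> ('g \<Rightarrow> real) \<Rightarrow> 'g \<Rightarrow> real" where
  "bS gmul e A1 A2 u p = reeb gmul e A1 A2 u p / hnorm gmul e A1 A2 u p"

definition Delta0 :: "('g::real_normed_vector \<Rightarrow> 'g \<Rightarrow> 'g) \<Rightarrow> 'g \<Rightarrow> 'g \<Rightarrow> 'g \<Rightarrow> ('g \<Rightarrow> real) \<Rightarrow> ('g \<Rightarrow> real) \<Rightarrow> 'g \<Rightarrow> real" where
  "Delta0 gmul e A1 A2 u f p =
     Xhat gmul e A1 A2 u (Xhat gmul e A1 A2 u f) p + bS gmul e A1 A2 u p * Xhat gmul e A1 A2 u f p"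

section \<open>The surface S and polar coordinates\<close>

definition Phi :: "('g::real_normed_vector \<Rightarrow> 'g \<Rightarrow> 'g) \<Rightarrow> 'g \<Rightarrow> 'g \<Rightarrow> 'g \<Rightarrow> real \<Rightarrow> real \<Rightarrow> 'g" where
  "Phi gmul e A1 A2 r \<theta> = gexp gmul e ((r * cos \<theta>) *\<^sub>R A1 + (r * sin \<theta>) *\<^sub>R A2)"

definition surfS :: "('g::real_normed_vector \<Rightarrow> 'g \<Rightarrow> 'g) \<Rightarrow> 'g \<Rightarrow> 'g \<Rightarrow> 'g \<Rightarrow> real set \<Rightarrow> 'g set" where
  "surfS gmul e A1 A2 I = {Phi gmul e A1 A2 r \<theta> | r \<theta>. r \<in> I \<and> 0 \<le> \<theta> \<and> \<theta> < 2 * pi}"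

text \<open>Admissible data at the point with polar coordinates (r,theta): u is a C2 defining
  function vanishing on S whose differential (in the frame X1,X2,X0) does not vanish there,
  f is a C2 test function, r in I, theta in [0, 2 pi).\<close>
definition admissible :: "('g::real_normed_vector \<Rightarrow> 'g \<Rightarrow> 'g) \<Rightarrow> 'g \<Rightarrow> 'g \<Rightarrow> 'g \<Rightarrow> real set
     \<Rightarrow> ('g \<Rightarrow> real) \<Rightarrow> ('g \<Rightarrow> real) \<Rightarrow> real \<Rightarrow> real \<Rightarrow> bool" where
  "admissible gmul e A1 A2 I u f r \<theta> \<longleftrightarrow>
     C2 u \<and> C2 f \<and> (\<forall>q \<in> surfS gmul e A1 A2 I. u q = 0) \<and> r \<in> I \<and> 0 \<le> \<theta> \<and> \<theta> < 2 * pi \<and>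
     (lvf gmul e A1 u (Phi gmul e A1 A2 r \<theta>), lvf gmul e A2 u (Phi gmul e A1 A2 r \<theta>),
      reeb gmul e A1 A2 u (Phi gmul e A1 A2 r \<theta>)) \<noteq> (0, 0, 0)"

text \<open>Statement: S has no characteristic points and in coordinates (r,theta)
  Delta0 = d^2/dr^2 + b(r) d/dr.\<close>
definition Delta0_polar_formula :: "('g::real_normed_vector \<Rightarrow> 'g \<Rightarrow> 'g) \<Rightarrow> 'g \<Rightarrow> 'g \<Rightarrow> 'g
     \<Rightarrow> real set \<Rightarrow> (real \<Rightarrow> real) \<Rightarrow> bool" where
  "Delta0_polar_formula gmul e A1 A2 I b \<longleftrightarrow>
     (\<forall>u f r \<theta>. admissible gmul e A1 A2 I u f r \<theta> \<longrightarrow>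
        (lvf gmul e A1 u (Phi gmul e A1 A2 r \<theta>) \<noteq> 0 \<or> lvf gmul e A2 u (Phi gmul e A1 A2 r \<theta>) \<noteq> 0) \<and>
        Delta0 gmul e A1 A2 u f (Phi gmul e A1 A2 r \<theta>) =
          deriv (deriv (\<lambda>s. f (Phi gmul e A1 A2 s \<theta>))) r
          + b r * deriv (\<lambda>s. f (Phi gmul e A1 A2 s \<theta>)) r)"

text \<open>Statement: (1/2) Delta0 acts along the leaves theta = const as the one-dimensional
  diffusion generator L (acting on functions of r).\<close>
definition half_Delta0_is_generator :: "('g::real_normed_vector \<Rightarrow> 'g \<Rightarrow> 'g) \<Rightarrow> 'g \<Rightarrow> 'g \<Rightarrow> 'g
     \<Rightarrow> real set \<Rightarrow> ((real \<Rightarrow> real) \<Rightarrow> real \<Rightarrow> real) \<Rightarrow> bool" where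
  "half_Delta0_is_generator gmul e A1 A2 I L \<longleftrightarrow>
     (\<forall>u f r \<theta>. admissible gmul e A1 A2 I u f r \<theta> \<longrightarrow>
        Delta0 gmul e A1 A2 u f (Phi gmul e A1 A2 r \<theta>) / 2 = L (\<lambda>s. f (Phi gmul e A1 A2 s \<theta>)) r)"

section \<open>Generators of the one-dimensional diffusions of order 3\<close>

definition bessel3_gen :: "(real \<Rightarrow> real) \<Rightarrow> real \<Rightarrow> real" where
  "bessel3_gen g r = deriv (deriv g) r / 2 + (1 / r) * deriv g r"

definition legendre3_gen :: "real \<Rightarrow> (real \<Rightarrow> real) \<Rightarrow> real \<Rightarrow> real" where
  "legendre3_gen k g r = deriv (deriv g) r / 2 + k * cot (k * r) * deriv g r"

definition hyp_bessel3_gen :: "real \<Rightarrow> (real \<Rightarrow> real) \<Rightarrow> real \<Rightarrow> real" where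
  "hyp_bessel3_gen k g r = deriv (deriv g) r / 2 + k * (cosh (k * r) / sinh (k * r)) * deriv g r"

section \<open>The model spaces\<close>

text \<open>Heisenberg group (kappa = 0): R^3 with the given law; X1, X2 have values
  (1,0,0), (0,1,0) at the identity (0,0,0).\<close>
definition heis_mult :: "real \<times> real \<times> real \<Rightarrow> real \<times> real \<times> real \<Rightarrow> real \<times> real \<times> real" where
  "heis_mult p q = (case p of (x1, y1, z1) \<Rightarrow> case q of (x2, y2, z2) \<Rightarrow>
      (x1 + x2, y1 + y2, z1 + z2 + (x1 * y2 - x2 * y1) / 2))"

text \<open>SU(2) (kappa = 4k^2) inside the 2x2 complex matrices; SL(2,R) (kappa = -4k^2)
  inside the 2x2 real matrices; multiplication is matrix product.\<close>
definition cmat :: "complex \<Rightarrow> complex \<Rightarrow> complex \<Rightarrow> complex \<Rightarrow> complex^2^2" where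
  "cmat a b c d = vector [vector [a, b], vector [c, d]]"

definition rmat :: "real \<Rightarrow> real \<Rightarrow> real \<Rightarrow> real \<Rightarrow> real^2^2" where
  "rmat a b c d = vector [vector [a, b], vector [c, d]]"

text \<open>Pauli matrices.\<close>
text \<open>Scalar multiple of a complex matrix.\<close>
definition cscale :: "complex \<Rightarrow> complex^2^2 \<Rightarrow> complex^2^2" where
  "cscale c M = (\<chi> i j. c * M $ i $ j)"

definition pauli1 :: "complex^2^2" where "pauli1 = cmat 0 1 1 0"
definition pauli2 :: "complex^2^2" where "pauli2 = cmat 0 (- \<i>) \<i> 0"

end

theory Submission
  imports Defs
begin

(* ---- Sym ---- *)
lemma line_deriv:
  fixes F :: "'g::real_normed_vector \<Rightarrow> real"
  assumes "(F has_derivative F') (at (x0 + s *\<^sub>R a))" "linear F'"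
  shows "((\<lambda>s. F (x0 + s *\<^sub>R a)) has_real_derivative F' a) (at s)"
proof -
  have l: "((\<lambda>s. x0 + s *\<^sub>R a) has_derivative (\<lambda>t. t *\<^sub>R a)) (at s)"
    by (auto intro!: derivative_eq_intros)
  have "((F \<circ> (\<lambda>s. x0 + s *\<^sub>R a)) has_derivative (F' \<circ> (\<lambda>t. t *\<^sub>R a))) (at s)"
    by (rule diff_chain_at[OF l assms(1)])
  moreover have "(F' \<circ> (\<lambda>t. t *\<^sub>R a)) = (*) (F' a)"
    using assms(2) by (auto simp: fun_eq_iff linear_scale)
  ultimately show ?thesis by (simp add: has_field_derivative_def comp_def)
qed

lemma Du_apply_deriv:
  fixes Du :: "'g::real_normed_vector \<Rightarrow> 'g \<Rightarrow>\<^sub>L real"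
  assumes "(Du has_derivative blinfun_apply (D2u x)) (at x)"
  shows "((\<lambda>y. blinfun_apply (Du y) a) has_derivative (\<lambda>w. blinfun_apply (blinfun_apply (D2u x) w) a)) (at x)"
  using bounded_bilinear.FDERIV[OF bounded_bilinear_blinfun_apply, OF assms has_derivative_const[of a]]
  by simp

lemma delta_mvt:
  fixes u :: "'g::real_normed_vector \<Rightarrow> real"
  assumes du: "\<And>x. (u has_derivative blinfun_apply (Du x)) (at x)"
    and d2u: "\<And>x. (Du has_derivative blinfun_apply (D2u x)) (at x)"
    and h: "h > 0"
  shows "\<exists>q. norm (q - p) \<le> h * (norm a + norm b) \<and>
    u (p + h *\<^sub>R a + h *\<^sub>R b) - u (p + h *\<^sub>R a) - u (p + h *\<^sub>R b) + u p
      = h\<^sup>2 * blinfun_apply (blinfun_apply (D2u q) b) a"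
proof -
  define \<psi> where "\<psi> s = u ((p + h *\<^sub>R b) + s *\<^sub>R a) - u (p + s *\<^sub>R a)" for s
  have "DERIV \<psi> s :> blinfun_apply (Du ((p + h *\<^sub>R b) + s *\<^sub>R a)) a - blinfun_apply (Du (p + s *\<^sub>R a)) a" for s
    unfolding \<psi>_def
    by (intro DERIV_diff line_deriv du bounded_linear.linear[OF blinfun.bounded_linear_right])
  from MVT2[OF h this] obtain \<xi> where xi: "0 < \<xi>" "\<xi> < h"
    "\<psi> h - \<psi> 0 = (h - 0) * (blinfun_apply (Du ((p + h *\<^sub>R b) + \<xi> *\<^sub>R a)) a - blinfun_apply (Du (p + \<xi> *\<^sub>R a)) a)"
    by blast
  define chi where "chi t = blinfun_apply (Du ((p + \<xi> *\<^sub>R a) + t *\<^sub>R b)) a" for t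
  have "DERIV chi t :> blinfun_apply (blinfun_apply (D2u ((p + \<xi> *\<^sub>R a) + t *\<^sub>R b)) b) a" for t
    unfolding chi_def
    by (rule line_deriv[where F="\<lambda>y. blinfun_apply (Du y) a", OF Du_apply_deriv[of Du D2u "(p + \<xi> *\<^sub>R a) + t *\<^sub>R b" a, OF d2u]])
       (auto intro!: linearI simp: blinfun.bilinear_simps)
  from MVT2[OF h this] obtain \<eta> where eta: "0 < \<eta>" "\<eta> < h"
    "chi h - chi 0 = (h - 0) * blinfun_apply (blinfun_apply (D2u ((p + \<xi> *\<^sub>R a) + \<eta> *\<^sub>R b)) b) a"
    by blast
  define q where "q = (p + \<xi> *\<^sub>R a) + \<eta> *\<^sub>R b"
  have "norm (q - p) \<le> norm (\<xi> *\<^sub>R a) + norm (\<eta> *\<^sub>R b)"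
    unfolding q_def using norm_triangle_ineq[of "\<xi> *\<^sub>R a" "\<eta> *\<^sub>R b"] by (simp add: algebra_simps)
  also have "\<dots> \<le> h * norm a + h * norm b"
    using xi eta by (intro add_mono) (auto intro!: mult_right_mono)
  finally have n: "norm (q - p) \<le> h * (norm a + norm b)" by (simp add: algebra_simps)
  have "chi h - chi 0 = blinfun_apply (Du ((p + h *\<^sub>R b) + \<xi> *\<^sub>R a)) a - blinfun_apply (Du (p + \<xi> *\<^sub>R a)) a"
    unfolding chi_def by (simp add: algebra_simps)
  then have "\<psi> h - \<psi> 0 = h\<^sup>2 * blinfun_apply (blinfun_apply (D2u q) b) a"
    using xi(3) eta(3) unfolding q_def by (simp add: power2_eq_square)
  moreover have "\<psi> h - \<psi> 0 = u (p + h *\<^sub>R a + h *\<^sub>R b) - u (p + h *\<^sub>R a) - u (p + h *\<^sub>R b) + u p"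
    unfolding \<psi>_def by (simp add: algebra_simps)
  ultimately show ?thesis using n by metis
qed

lemma C2_sym:
  fixes u :: "'g::real_normed_vector \<Rightarrow> real"
  assumes du: "\<And>x. (u has_derivative blinfun_apply (Du x)) (at x)"
    and d2u: "\<And>x. (Du has_derivative blinfun_apply (D2u x)) (at x)"
    and cont: "continuous_on UNIV D2u"
  shows "blinfun_apply (blinfun_apply (D2u p) a) b = blinfun_apply (blinfun_apply (D2u p) b) a"
proof (rule ccontr)
  let ?d = "\<bar>blinfun_apply (blinfun_apply (D2u p) a) b - blinfun_apply (blinfun_apply (D2u p) b) a\<bar>"
  assume "\<not> ?thesis"
  then have d: "?d > 0" by simp
  define \<epsilon> where "\<epsilon> = ?d / (2 * (norm a * norm b + 1))"
  have eps: "\<epsilon> > 0" unfolding \<epsilon>_def using d by (simp add: add_nonneg_pos)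
  have "isCont D2u p" using cont by (simp add: continuous_on_eq_continuous_at)
  then obtain \<delta> where dl: "\<delta> > 0" "\<And>q. dist q p < \<delta> \<Longrightarrow> dist (D2u q) (D2u p) < \<epsilon>"
    using eps unfolding continuous_at_eps_delta by metis
  define h where "h = \<delta> / (2 * (norm a + norm b + 1))"
  have h: "h > 0" unfolding h_def using dl by (simp add: add_nonneg_pos)
  have hs: "h * (norm a + norm b) < \<delta>"
  proof -
    have "h * (norm a + norm b) < h * (norm a + norm b + 1)" using h by simp
    also have "\<dots> = \<delta> / 2" unfolding h_def
      using add_nonneg_pos[of "norm a + norm b" 1] by (simp add: field_simps)
    finally show ?thesis using dl by simp
  qed
  obtain q1 where q1: "norm (q1 - p) \<le> h * (norm a + norm b)"
    "u (p + h *\<^sub>R a + h *\<^sub>R b) - u (p + h *\<^sub>R a) - u (p + h *\<^sub>R b) + u p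
      = h\<^sup>2 * blinfun_apply (blinfun_apply (D2u q1) b) a"
    using delta_mvt[OF du d2u h] by blast
  obtain q2 where q2: "norm (q2 - p) \<le> h * (norm b + norm a)"
    "u (p + h *\<^sub>R b + h *\<^sub>R a) - u (p + h *\<^sub>R b) - u (p + h *\<^sub>R a) + u p
      = h\<^sup>2 * blinfun_apply (blinfun_apply (D2u q2) a) b"
    using delta_mvt[OF du d2u h] by blast
  have eq: "blinfun_apply (blinfun_apply (D2u q1) b) a = blinfun_apply (blinfun_apply (D2u q2) a) b"
    using q1(2) q2(2) h by (simp add: algebra_simps)
  have c1: "norm (D2u q1 - D2u p) < \<epsilon>" using dl(2)[of q1] q1(1) hs by (simp add: dist_norm)
  have c2: "norm (D2u q2 - D2u p) < \<epsilon>" using dl(2)[of q2] q2(1) hs by (simp add: dist_norm add.commute)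
  have b1: "\<bar>blinfun_apply (blinfun_apply (D2u q1 - D2u p) b) a\<bar> \<le> \<epsilon> * (norm a * norm b)"
  proof -
    have "\<bar>blinfun_apply (blinfun_apply (D2u q1 - D2u p) b) a\<bar> \<le> norm (blinfun_apply (D2u q1 - D2u p) b) * norm a"
      using norm_blinfun[of "blinfun_apply (D2u q1 - D2u p) b" a] by simp
    also have "\<dots> \<le> norm (D2u q1 - D2u p) * norm b * norm a"
      by (intro mult_right_mono norm_blinfun) simp
    also have "\<dots> \<le> \<epsilon> * norm b * norm a"
      using c1 by (intro mult_right_mono) auto
    also have "\<dots> = \<epsilon> * (norm a * norm b)" by simp
    finally show ?thesis .
  qed
  have b2: "\<bar>blinfun_apply (blinfun_apply (D2u q2 - D2u p) a) b\<bar> \<le> \<epsilon> * (norm a * norm b)"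
  proof -
    have "\<bar>blinfun_apply (blinfun_apply (D2u q2 - D2u p) a) b\<bar> \<le> norm (blinfun_apply (D2u q2 - D2u p) a) * norm b"
      using norm_blinfun[of "blinfun_apply (D2u q2 - D2u p) a" b] by simp
    also have "\<dots> \<le> norm (D2u q2 - D2u p) * norm a * norm b"
      by (intro mult_right_mono norm_blinfun) simp
    also have "\<dots> \<le> \<epsilon> * norm a * norm b"
      using c2 by (intro mult_right_mono) auto
    also have "\<dots> = \<epsilon> * (norm a * norm b)" by simp
    finally show ?thesis .
  qed
  have "?d \<le> 2 * \<epsilon> * (norm a * norm b)"
    using b1 b2 eq by (simp add: blinfun.bilinear_simps abs_le_iff)
  also have "\<dots> < 2 * \<epsilon> * (norm a * norm b + 1)" using eps by simp
  also have "\<dots> = ?d" unfolding \<epsilon>_def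
    using add_nonneg_pos[of "norm a * norm b" 1] by (simp add: field_simps)
  finally show False by simp
qed

(* ---- Core ---- *)
lemma chain_real:
  fixes F :: "'g::real_normed_vector \<Rightarrow> real"
  assumes "(F has_derivative F') (at (c t))" "(c has_vector_derivative c') (at t)"
  shows "((\<lambda>t. F (c t)) has_real_derivative F' c') (at t)"
proof -
  have l: "(c has_derivative (\<lambda>h. h *\<^sub>R c')) (at t)"
    using assms(2) by (simp add: has_vector_derivative_def)
  have "((F \<circ> c) has_derivative (F' \<circ> (\<lambda>h. h *\<^sub>R c'))) (at t)"
    by (rule diff_chain_at[OF l assms(1)])
  moreover have "linear F'" using assms(1) has_derivative_linear by blast
  then have "(F' \<circ> (\<lambda>h. h *\<^sub>R c')) = (*) (F' c')"
    by (auto simp: fun_eq_iff linear_scale)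
  ultimately show ?thesis by (simp add: has_field_derivative_def comp_def)
qed

lemma deriv_zero_on_open:
  fixes F :: "real \<Rightarrow> real"
  assumes "open I" "s \<in> I" "\<And>x. x \<in> I \<Longrightarrow> F x = 0" "DERIV F s :> D"
  shows "D = 0"
proof -
  have "DERIV (\<lambda>x. 0::real) s :> D"
    by (rule has_field_derivative_transform_within_open[OF assms(4) assms(1) assms(2)]) (simp add: assms(3))
  then show ?thesis using DERIV_const DERIV_unique by blast
qed

lemma Phi_scale: "Phi gmul e A1 A2 s \<theta> = gexp gmul e (s *\<^sub>R (cos \<theta> *\<^sub>R A1 + sin \<theta> *\<^sub>R A2))"
  by (simp add: Phi_def scaleR_add_right)

lemma Phi_periodic:
  "\<exists>\<theta>'. 0 \<le> \<theta>' \<and> \<theta>' < 2 * pi \<and> Phi gmul e A1 A2 s \<theta> = Phi gmul e A1 A2 s \<theta>'"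
proof -
  define n where "n = \<lfloor>\<theta> / (2 * pi)\<rfloor>"
  define \<theta>' where "\<theta>' = \<theta> - (2 * pi) * of_int n"
  have "of_int n \<le> \<theta> / (2 * pi)" "\<theta> / (2 * pi) < of_int n + 1"
    unfolding n_def by linarith+
  then have "0 \<le> \<theta>'" "\<theta>' < 2 * pi" unfolding \<theta>'_def
    by (auto simp: field_simps)
  moreover have "cos \<theta>' = cos \<theta>" "sin \<theta>' = sin \<theta>"
    unfolding \<theta>'_def by (simp_all add: cos_diff sin_diff)
  ultimately show ?thesis by (intro exI[of _ \<theta>']) (simp add: Phi_def)
qed

locale lg =
  fixes gmul :: "'g::real_normed_vector \<Rightarrow> 'g \<Rightarrow> 'g" and e :: 'g
    and V :: "'g \<Rightarrow> 'g \<Rightarrow> 'g" and DV :: "'g \<Rightarrow> 'g \<Rightarrow> 'g \<Rightarrow> 'g"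
    and A1 A2 A0 :: 'g
  assumes curve: "\<And>p x y. x\<^sup>2 + y\<^sup>2 = 1 \<Longrightarrow> ((\<lambda>t. gmul p (gexp gmul e (t *\<^sub>R (x *\<^sub>R A1 + y *\<^sub>R A2))))
        has_vector_derivative V (x *\<^sub>R A1 + y *\<^sub>R A2) p) (at 0)"
    and curve0: "\<And>p. gmul p (gexp gmul e 0) = p"
    and gexp_add: "\<And>x y s t. x\<^sup>2 + y\<^sup>2 = 1 \<Longrightarrow> gexp gmul e ((s + t) *\<^sub>R (x *\<^sub>R A1 + y *\<^sub>R A2)) =
        gmul (gexp gmul e (s *\<^sub>R (x *\<^sub>R A1 + y *\<^sub>R A2))) (gexp gmul e (t *\<^sub>R (x *\<^sub>R A1 + y *\<^sub>R A2)))"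
    and V_lin: "\<And>p. linear (\<lambda>A. V A p)"
    and V_der: "\<And>A p. (V A has_derivative DV A p) (at p)"
    and bracket: "\<And>p. DV A2 p (V A1 p) - DV A1 p (V A2 p) = V A0 p"
begin

lemma lvf_diff_gen:
  assumes "(f has_derivative Df) (at p)" and xy: "x\<^sup>2 + y\<^sup>2 = 1"
  shows "lvf gmul e (x *\<^sub>R A1 + y *\<^sub>R A2) f p = Df (V (x *\<^sub>R A1 + y *\<^sub>R A2) p)"
proof -
  let ?c = "\<lambda>t. gmul p (gexp gmul e (t *\<^sub>R (x *\<^sub>R A1 + y *\<^sub>R A2)))"
  have c0: "?c 0 = p" using curve0 by simp
  have "((\<lambda>t. f (?c t)) has_real_derivative Df (V (x *\<^sub>R A1 + y *\<^sub>R A2) p)) (at 0)"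
    by (rule chain_real) (use assms c0 curve[OF xy] in auto)
  then show ?thesis unfolding lvf_def by (rule DERIV_imp_deriv)
qed

lemma lvf_A1: "(f has_derivative Df) (at p) \<Longrightarrow> lvf gmul e A1 f p = Df (V A1 p)"
  using lvf_diff_gen[of f Df p 1 0] by simp

lemma lvf_A2: "(f has_derivative Df) (at p) \<Longrightarrow> lvf gmul e A2 f p = Df (V A2 p)"
  using lvf_diff_gen[of f Df p 0 1] by simp

lemma Phi_deriv:
  "((\<lambda>s. Phi gmul e A1 A2 s \<theta>) has_vector_derivative V (cos \<theta> *\<^sub>R A1 + sin \<theta> *\<^sub>R A2) (Phi gmul e A1 A2 s0 \<theta>)) (at s0)"
proof -
  let ?v = "cos \<theta> *\<^sub>R A1 + sin \<theta> *\<^sub>R A2"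
  have eq: "Phi gmul e A1 A2 (s0 + t) \<theta> = gmul (Phi gmul e A1 A2 s0 \<theta>) (gexp gmul e (t *\<^sub>R ?v))" for t
    unfolding Phi_scale by (rule gexp_add) simp
  have d: "((\<lambda>t. Phi gmul e A1 A2 (s0 + t) \<theta>) has_vector_derivative V ?v (Phi gmul e A1 A2 s0 \<theta>)) (at 0)"
    unfolding eq by (rule curve) simp
  have l: "((\<lambda>s. s - s0) has_vector_derivative 1) (at s0)"
    by (auto intro!: derivative_eq_intros)
  have "(((\<lambda>t. Phi gmul e A1 A2 (s0 + t) \<theta>) \<circ> (\<lambda>s. s - s0)) has_vector_derivative 1 *\<^sub>R V ?v (Phi gmul e A1 A2 s0 \<theta>)) (at s0)"
    by (rule vector_diff_chain_at[OF l]) (simp add: d)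
  then show ?thesis by (simp add: comp_def)
qed

lemma Xfun:
  assumes "\<And>x. (u has_derivative blinfun_apply (Du x)) (at x)"
  shows "lvf gmul e A1 u = (\<lambda>q. blinfun_apply (Du q) (V A1 q))"
    "lvf gmul e A2 u = (\<lambda>q. blinfun_apply (Du q) (V A2 q))"
  using lvf_A1[OF assms] lvf_A2[OF assms] by auto

lemma Xfun_deriv:
  assumes "\<And>x. (Du has_derivative blinfun_apply (D2u x)) (at x)"
  shows "((\<lambda>q. blinfun_apply (Du q) (V A q)) has_derivative
     (\<lambda>w. blinfun_apply (Du p) (DV A p w) + blinfun_apply (blinfun_apply (D2u p) w) (V A p))) (at p)"
  using bounded_bilinear.FDERIV[OF bounded_bilinear_blinfun_apply, OF assms V_der] by simp

lemma reeb_eq: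
  assumes du: "\<And>x. (u has_derivative blinfun_apply (Du x)) (at x)"
    and d2u: "\<And>x. (Du has_derivative blinfun_apply (D2u x)) (at x)"
    and cont: "continuous_on UNIV D2u"
  shows "reeb gmul e A1 A2 u p = blinfun_apply (Du p) (V A0 p)"
proof -
  have "reeb gmul e A1 A2 u p =
     (blinfun_apply (Du p) (DV A2 p (V A1 p)) + blinfun_apply (blinfun_apply (D2u p) (V A1 p)) (V A2 p))
   - (blinfun_apply (Du p) (DV A1 p (V A2 p)) + blinfun_apply (blinfun_apply (D2u p) (V A2 p)) (V A1 p))"
    unfolding reeb_def Xfun[OF du]
    by (simp add: lvf_A1[OF Xfun_deriv[OF d2u]] lvf_A2[OF Xfun_deriv[OF d2u]])
  also have "\<dots> = blinfun_apply (Du p) (DV A2 p (V A1 p) - DV A1 p (V A2 p))"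
    using C2_sym[OF du d2u cont, of p "V A1 p" "V A2 p"] by (simp add: blinfun.bilinear_simps)
  finally show ?thesis using bracket by simp
qed

end

(* ---- Polar ---- *)
context lg begin

lemma V_add: "V (x + y) q = V x q + V y q"
  using linear_add[OF V_lin[of q]] by simp
lemma V_scale: "V (c *\<^sub>R x) q = c *\<^sub>R V x q"
  using linear_scale[OF V_lin[of q]] by simp

lemma polar:
  assumes I: "open I"
    and th: "\<And>r \<theta>. r \<in> I \<Longrightarrow> ((\<lambda>\<theta>. Phi gmul e A1 A2 r \<theta>) has_vector_derivative
        (\<alpha> r \<theta> *\<^sub>R V A1 (Phi gmul e A1 A2 r \<theta>) + \<beta> r \<theta> *\<^sub>R V A2 (Phi gmul e A1 A2 r \<theta>)
         + \<gamma> r \<theta> *\<^sub>R V A0 (Phi gmul e A1 A2 r \<theta>))) (at \<theta>)"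
    and gnz: "\<And>r \<theta>. r \<in> I \<Longrightarrow> \<gamma> r \<theta> \<noteq> 0"
    and beq: "\<And>r \<theta>. r \<in> I \<Longrightarrow> (\<alpha> r \<theta> * sin \<theta> - \<beta> r \<theta> * cos \<theta>) / \<gamma> r \<theta> = b r"
  shows "Delta0_polar_formula gmul e A1 A2 I b"
  unfolding Delta0_polar_formula_def
proof (intro allI impI)
  fix u f r \<theta> assume adm: "admissible gmul e A1 A2 I u f r \<theta>"
  from adm obtain Du D2u where du: "\<And>x. (u has_derivative blinfun_apply (Du x)) (at x)"
    and d2u: "\<And>x. (Du has_derivative blinfun_apply (D2u x)) (at x)" and cu: "continuous_on UNIV D2u"
    unfolding admissible_def C2_def by blast
  from adm obtain Df D2f where df: "\<And>x. (f has_derivative blinfun_apply (Df x)) (at x)"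
    and d2f: "\<And>x. (Df has_derivative blinfun_apply (D2f x)) (at x)"
    unfolding admissible_def C2_def by blast
  have uS: "\<And>q. q \<in> surfS gmul e A1 A2 I \<Longrightarrow> u q = 0" and rI: "r \<in> I"
    using adm unfolding admissible_def by auto
  define P where "P s = Phi gmul e A1 A2 s \<theta>" for s
  define v where "v = cos \<theta> *\<^sub>R A1 + sin \<theta> *\<^sub>R A2"
  define p where "p = P r"
  have nz: "(lvf gmul e A1 u p, lvf gmul e A2 u p, reeb gmul e A1 A2 u p) \<noteq> (0, 0, 0)"
    using adm unfolding admissible_def p_def P_def by auto
  have Pd: "\<And>s. (P has_vector_derivative V v (P s)) (at s)"
    unfolding P_def v_def by (rule Phi_deriv)
  have Vv: "\<And>q. V v q = cos \<theta> *\<^sub>R V A1 q + sin \<theta> *\<^sub>R V A2 q"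
    unfolding v_def by (simp add: V_add V_scale)
  have uzero: "\<And>s \<theta>'. s \<in> I \<Longrightarrow> u (Phi gmul e A1 A2 s \<theta>') = 0"
  proof -
    fix s \<theta>' assume s: "s \<in> I"
    obtain \<theta>'' where "0 \<le> \<theta>''" "\<theta>'' < 2 * pi" "Phi gmul e A1 A2 s \<theta>' = Phi gmul e A1 A2 s \<theta>''"
      using Phi_periodic by blast
    then show "u (Phi gmul e A1 A2 s \<theta>') = 0"
      using s by (intro uS) (auto simp: surfS_def)
  qed
  define a1 where "a1 s = blinfun_apply (Du (P s)) (V A1 (P s))" for s
  define a2 where "a2 s = blinfun_apply (Du (P s)) (V A2 (P s))" for s
  define a0 where "a0 = blinfun_apply (Du p) (V A0 p)"
  have perp: "cos \<theta> * a1 s + sin \<theta> * a2 s = 0" if s: "s \<in> I" for s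
  proof -
    have "((\<lambda>t. u (P t)) has_real_derivative blinfun_apply (Du (P s)) (V v (P s))) (at s)"
      by (rule chain_real[OF du Pd])
    then have "blinfun_apply (Du (P s)) (V v (P s)) = 0"
      by (rule deriv_zero_on_open[OF I s, rotated]) (simp add: P_def uzero)
    then show ?thesis unfolding Vv a1_def a2_def by (simp add: blinfun.bilinear_simps)
  qed
  have tht: "\<alpha> r \<theta> * a1 r + \<beta> r \<theta> * a2 r + \<gamma> r \<theta> * a0 = 0"
  proof -
    have "((\<lambda>t. u (Phi gmul e A1 A2 r t)) has_real_derivative blinfun_apply (Du p)
        (\<alpha> r \<theta> *\<^sub>R V A1 p + \<beta> r \<theta> *\<^sub>R V A2 p + \<gamma> r \<theta> *\<^sub>R V A0 p)) (at \<theta>)"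
      unfolding p_def P_def by (rule chain_real[OF du th[OF rI]])
    then have "blinfun_apply (Du p) (\<alpha> r \<theta> *\<^sub>R V A1 p + \<beta> r \<theta> *\<^sub>R V A2 p + \<gamma> r \<theta> *\<^sub>R V A0 p) = 0"
      by (rule deriv_zero_on_open[OF open_UNIV UNIV_I, rotated]) (simp add: uzero[OF rI])
    then show ?thesis unfolding a1_def a2_def a0_def p_def by (simp add: blinfun.bilinear_simps)
  qed
  define \<rho> where "\<rho> s = - sin \<theta> * a1 s + cos \<theta> * a2 s" for s
  have a1r: "a1 s = - \<rho> s * sin \<theta>" if s: "s \<in> I" for s
  proof -
    have e1: "sin \<theta> * a2 s = - (cos \<theta> * a1 s)" using perp[OF s] by linarith
    have "- \<rho> s * sin \<theta> = (sin \<theta>)\<^sup>2 * a1 s - cos \<theta> * (sin \<theta> * a2 s)"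
      by (simp add: \<rho>_def algebra_simps power2_eq_square)
    also have "\<dots> = ((sin \<theta>)\<^sup>2 + (cos \<theta>)\<^sup>2) * a1 s" unfolding e1 by algebra
    finally show ?thesis by simp
  qed
  have a2r: "a2 s = \<rho> s * cos \<theta>" if s: "s \<in> I" for s
  proof -
    have e1: "cos \<theta> * a1 s = - (sin \<theta> * a2 s)" using perp[OF s] by linarith
    have "\<rho> s * cos \<theta> = - sin \<theta> * (cos \<theta> * a1 s) + (cos \<theta>)\<^sup>2 * a2 s"
      by (simp add: \<rho>_def algebra_simps power2_eq_square)
    also have "\<dots> = ((sin \<theta>)\<^sup>2 + (cos \<theta>)\<^sup>2) * a2 s" unfolding e1 by algebra
    finally show ?thesis by simp
  qed
  have hn: "hnorm gmul e A1 A2 u (P s) = \<bar>\<rho> s\<bar>" if s: "s \<in> I" for s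
  proof -
    have "hnorm gmul e A1 A2 u (P s) = sqrt ((a1 s)\<^sup>2 + (a2 s)\<^sup>2)"
      unfolding hnorm_def Xfun[OF du] a1_def a2_def by simp
    also have "(a1 s)\<^sup>2 + (a2 s)\<^sup>2 = (\<rho> s)\<^sup>2 * ((sin \<theta>)\<^sup>2 + (cos \<theta>)\<^sup>2)"
      unfolding a1r[OF s] a2r[OF s] by algebra
    finally show ?thesis by simp
  qed
  have reeb: "reeb gmul e A1 A2 u p = a0" unfolding a0_def by (rule reeb_eq[OF du d2u cu])
  have a0r: "a0 = \<rho> r * b r"
  proof -
    have "\<gamma> r \<theta> * a0 = \<rho> r * (\<alpha> r \<theta> * sin \<theta> - \<beta> r \<theta> * cos \<theta>)"
      using tht unfolding a1r[OF rI] a2r[OF rI] by (simp add: algebra_simps)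
    moreover have "\<alpha> r \<theta> * sin \<theta> - \<beta> r \<theta> * cos \<theta> = b r * \<gamma> r \<theta>"
      using gnz[of r \<theta>, OF rI] beq[of r \<theta>, OF rI] by (simp add: field_simps)
    ultimately have "\<gamma> r \<theta> * a0 = \<gamma> r \<theta> * (\<rho> r * b r)" by simp
    then show ?thesis using gnz[of r \<theta>, OF rI] by simp
  qed
  have X1u: "lvf gmul e A1 u p = a1 r" and X2u: "lvf gmul e A2 u p = a2 r"
    unfolding Xfun[OF du] a1_def a2_def p_def by simp_all
  have rnz: "\<rho> r \<noteq> 0"
  proof
    assume "\<rho> r = 0"
    then have "a1 r = 0" "a2 r = 0" "a0 = 0" using a1r[OF rI] a2r[OF rI] a0r by simp_all
    then show False using nz X1u X2u reeb by simp
  qed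
  have Xhat_at: "Xhat gmul e A1 A2 u g (P s) = sgn (\<rho> s) * Dg (V v (P s))"
    if s: "s \<in> I" and rs: "\<rho> s \<noteq> 0" and dg: "(g has_derivative Dg) (at (P s))" for s g Dg
  proof -
    have lin: "linear Dg" using dg has_derivative_linear by blast
    have "Dg (V v (P s)) = cos \<theta> * Dg (V A1 (P s)) + sin \<theta> * Dg (V A2 (P s))"
      unfolding Vv using linear_add[OF lin] linear_scale[OF lin] by simp
    moreover have "Xhat gmul e A1 A2 u g (P s) =
        (a2 s * Dg (V A1 (P s)) - a1 s * Dg (V A2 (P s))) / \<bar>\<rho> s\<bar>"
      unfolding Xhat_def hn[OF s] lvf_A1[OF dg] lvf_A2[OF dg] Xfun[OF du] a1_def a2_def by simp
    ultimately show ?thesis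
      unfolding a1r[OF s] a2r[OF s] real_sgn_eq by (simp add: field_simps)
  qed
  define F1 where "F1 s = blinfun_apply (Df (P s)) (V v (P s))" for s
  have dF: "DERIV (\<lambda>s. f (P s)) s :> F1 s" for s
    unfolding F1_def by (rule chain_real[OF df Pd])
  have dF': "deriv (\<lambda>s. f (Phi gmul e A1 A2 s \<theta>)) = F1"
    using dF unfolding P_def by (auto intro!: DERIV_imp_deriv)
  obtain F2 where dF1: "DERIV F1 r :> F2"
    unfolding F1_def using chain_real[OF Xfun_deriv[OF d2f] Pd] by blast
  have dF'': "deriv (deriv (\<lambda>s. f (Phi gmul e A1 A2 s \<theta>))) r = F2"
    unfolding dF' using dF1 by (rule DERIV_imp_deriv)
  have cont_rho: "isCont \<rho> r"
  proof -
    obtain c1 where "DERIV a1 r :> c1" unfolding a1_def using chain_real[OF Xfun_deriv[OF d2u] Pd] by blast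
    moreover obtain c2 where "DERIV a2 r :> c2" unfolding a2_def using chain_real[OF Xfun_deriv[OF d2u] Pd] by blast
    ultimately have "DERIV \<rho> r :> - sin \<theta> * c1 + cos \<theta> * c2"
      unfolding \<rho>_def[abs_def] by (auto intro!: derivative_eq_intros)
    then show ?thesis by (rule DERIV_isCont)
  qed
  have ev_sgn: "\<forall>\<^sub>F s in nhds r. sgn (\<rho> s) = sgn (\<rho> r)"
  proof -
    have tl: "(\<rho> \<longlongrightarrow> \<rho> r) (at r)" using cont_rho by (simp add: isCont_def)
    have "\<forall>\<^sub>F s in at r. sgn (\<rho> s) = sgn (\<rho> r)"
    proof (cases "\<rho> r > 0")
      case True
      then show ?thesis using order_tendstoD(1)[OF tl, of 0] by (auto elim!: eventually_mono)
    next
      case False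
      then have "\<rho> r < 0" using rnz by simp
      then show ?thesis using order_tendstoD(2)[OF tl, of 0] by (auto elim!: eventually_mono)
    qed
    then show ?thesis by (simp add: eventually_nhds_conv_at)
  qed
  have ev: "\<forall>\<^sub>F s in nhds r. s \<in> I \<and> sgn (\<rho> s) = sgn (\<rho> r)"
    using eventually_conj[OF eventually_nhds_in_open[OF I rI] ev_sgn] .
  define g where "g = Xhat gmul e A1 A2 u f"
  have geq: "g = (\<lambda>q. (blinfun_apply (Du q) (V A2 q) * blinfun_apply (Df q) (V A1 q)
        - blinfun_apply (Du q) (V A1 q) * blinfun_apply (Df q) (V A2 q))
        / sqrt ((blinfun_apply (Du q) (V A1 q))\<^sup>2 + (blinfun_apply (Du q) (V A2 q))\<^sup>2))"
    unfolding g_def Xhat_def[abs_def] hnorm_def Xfun[OF du] Xfun[OF df] by simp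
  have pos: "0 < (blinfun_apply (Du p) (V A1 p))\<^sup>2 + (blinfun_apply (Du p) (V A2 p))\<^sup>2"
  proof -
    have "(blinfun_apply (Du p) (V A1 p))\<^sup>2 + (blinfun_apply (Du p) (V A2 p))\<^sup>2 = (\<rho> r)\<^sup>2"
      using hn[OF rI] unfolding hnorm_def Xfun[OF du] p_def
      by (metis abs_of_nonneg power2_abs real_sqrt_pow2 sum_power2_ge_zero zero_le_power2)
    then show ?thesis using rnz by simp
  qed
  obtain Dg where dg: "(g has_derivative Dg) (at p)"
  proof -
    note D1 = Xfun_deriv[OF d2u, of A1 p] and D2 = Xfun_deriv[OF d2u, of A2 p]
      and E1 = Xfun_deriv[OF d2f, of A1 p] and E2 = Xfun_deriv[OF d2f, of A2 p]
    have d1: "(\<lambda>q. blinfun_apply (Du q) (V A1 q)) differentiable (at p)"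
      using D1 unfolding differentiable_def by blast
    have d2: "(\<lambda>q. blinfun_apply (Du q) (V A2 q)) differentiable (at p)"
      using D2 unfolding differentiable_def by blast
    have e1: "(\<lambda>q. blinfun_apply (Df q) (V A1 q)) differentiable (at p)"
      using E1 unfolding differentiable_def by blast
    have e2: "(\<lambda>q. blinfun_apply (Df q) (V A2 q)) differentiable (at p)"
      using E2 unfolding differentiable_def by blast
    have sq: "sqrt differentiable (at y)" if "y > 0" for y
      using DERIV_real_sqrt[OF that] unfolding differentiable_def has_field_derivative_def by blast
    have h: "(\<lambda>q. (blinfun_apply (Du q) (V A1 q))\<^sup>2 + (blinfun_apply (Du q) (V A2 q))\<^sup>2) differentiable (at p)"
      by (intro differentiable_add differentiable_power d1 d2)
    have "(sqrt \<circ> (\<lambda>q. (blinfun_apply (Du q) (V A1 q))\<^sup>2 + (blinfun_apply (Du q) (V A2 q))\<^sup>2)) differentiable (at p)"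
      by (rule differentiable_chain_at[OF h sq]) (use pos in simp)
    then have "(\<lambda>q. sqrt ((blinfun_apply (Du q) (V A1 q))\<^sup>2 + (blinfun_apply (Du q) (V A2 q))\<^sup>2)) differentiable (at p)"
      by (simp add: comp_def)
    then have "g differentiable (at p)"
      unfolding geq using pos
      by (intro differentiable_divide differentiable_diff differentiable_mult d1 d2 e1 e2) auto
    then have "\<exists>D. (g has_derivative D) (at p)" unfolding differentiable_def by blast
    then show ?thesis using that by blast
  qed
  have dG: "DERIV (\<lambda>s. g (P s)) r :> Dg (V v p)"
    using chain_real[of g Dg P r, OF _ Pd] dg unfolding p_def by simp
  have dG2: "DERIV (\<lambda>s. g (P s)) r :> sgn (\<rho> r) * F2"
  proof -
    have "DERIV (\<lambda>s. sgn (\<rho> r) * F1 s) r :> sgn (\<rho> r) * F2"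
      by (rule DERIV_cmult[OF dF1])
    moreover have "\<forall>\<^sub>F s in nhds r. g (P s) = sgn (\<rho> r) * F1 s"
      using ev
    proof (rule eventually_mono)
      fix s assume s: "s \<in> I \<and> sgn (\<rho> s) = sgn (\<rho> r)"
      then have "\<rho> s \<noteq> 0" using rnz by (auto simp: sgn_0_0)
      then show "g (P s) = sgn (\<rho> r) * F1 s"
        using Xhat_at[of s f "blinfun_apply (Df (P s))"] s df unfolding g_def F1_def by simp
    qed
    ultimately show ?thesis using DERIV_cong_ev[of r r "\<lambda>s. g (P s)" "\<lambda>s. sgn (\<rho> r) * F1 s"] by simp
  qed
  have DgV: "Dg (V v p) = sgn (\<rho> r) * F2" using DERIV_unique[OF dG dG2] .
  have sq: "sgn (\<rho> r) * sgn (\<rho> r) = 1" using rnz by (cases "\<rho> r > 0") auto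
  have XXf: "Xhat gmul e A1 A2 u g p = F2"
    using Xhat_at[OF rI rnz dg[unfolded p_def]] unfolding p_def[symmetric] DgV
    by (simp add: mult.assoc[symmetric] sq rnz)
  have Xf: "Xhat gmul e A1 A2 u f p = sgn (\<rho> r) * F1 r"
    using Xhat_at[OF rI rnz df[of "P r"]] unfolding p_def F1_def by simp
  have bS: "bS gmul e A1 A2 u p = sgn (\<rho> r) * b r"
    unfolding bS_def reeb hn[OF rI, folded p_def] a0r real_sgn_eq by simp
  have "Delta0 gmul e A1 A2 u f p = F2 + b r * F1 r"
    unfolding Delta0_def XXf[unfolded g_def] Xf bS
    using sq by (simp add: algebra_simps)
  moreover have "lvf gmul e A1 u p \<noteq> 0 \<or> lvf gmul e A2 u p \<noteq> 0"
  proof (rule ccontr)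
    assume "\<not> ?thesis"
    then have "a1 r = 0" "a2 r = 0" using X1u X2u by auto
    then have "hnorm gmul e A1 A2 u p = 0" unfolding hnorm_def Xfun[OF du] a1_def a2_def p_def by simp
    then show False using hn[OF rI] rnz unfolding p_def by simp
  qed
  ultimately show "(lvf gmul e A1 u (Phi gmul e A1 A2 r \<theta>) \<noteq> 0 \<or> lvf gmul e A2 u (Phi gmul e A1 A2 r \<theta>) \<noteq> 0) \<and>
        Delta0 gmul e A1 A2 u f (Phi gmul e A1 A2 r \<theta>) =
          deriv (deriv (\<lambda>s. f (Phi gmul e A1 A2 s \<theta>))) r
          + b r * deriv (\<lambda>s. f (Phi gmul e A1 A2 s \<theta>)) r"
    unfolding dF' p_def P_def using DERIV_imp_deriv[OF dF1] by simp
qed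

end

lemma half_gen:
  assumes "Delta0_polar_formula gmul e A1 A2 I b"
    and "\<And>g r. r \<in> I \<Longrightarrow> L g r = deriv (deriv g) r / 2 + (b r / 2) * deriv g r"
  shows "half_Delta0_is_generator gmul e A1 A2 I L"
  unfolding half_Delta0_is_generator_def
proof (intro allI impI)
  fix u f r \<theta> assume adm: "admissible gmul e A1 A2 I u f r \<theta>"
  then have "r \<in> I" unfolding admissible_def by simp
  then have "L (\<lambda>s. f (Phi gmul e A1 A2 s \<theta>)) r = deriv (deriv (\<lambda>s. f (Phi gmul e A1 A2 s \<theta>))) r / 2
      + (b r / 2) * deriv (\<lambda>s. f (Phi gmul e A1 A2 s \<theta>)) r" by (rule assms(2))
  moreover have "Delta0 gmul e A1 A2 u f (Phi gmul e A1 A2 r \<theta>) = deriv (deriv (\<lambda>s. f (Phi gmul e A1 A2 s \<theta>))) r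
      + b r * deriv (\<lambda>s. f (Phi gmul e A1 A2 s \<theta>)) r"
    using assms(1) adm unfolding Delta0_polar_formula_def by blast
  ultimately show "Delta0 gmul e A1 A2 u f (Phi gmul e A1 A2 r \<theta>) / 2 = L (\<lambda>s. f (Phi gmul e A1 A2 s \<theta>)) r"
    by simp
qed

lemma shift_vd:
  assumes "((\<lambda>h. f (s + h)) has_vector_derivative D) (at 0)"
  shows "(f has_vector_derivative D) (at s)"
proof -
  have l: "((\<lambda>x. x - s) has_vector_derivative 1) (at s)"
    by (auto intro!: derivative_eq_intros)
  have "(((\<lambda>h. f (s + h)) \<circ> (\<lambda>x. x - s)) has_vector_derivative 1 *\<^sub>R D) (at s)"
    by (rule vector_diff_chain_at[OF l]) (simp add: assms)
  then show ?thesis by (simp add: comp_def)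
qed

lemma lin_vd:
  assumes "bounded_linear T" "(f has_vector_derivative f') F"
  shows "((\<lambda>x. T (f x)) has_vector_derivative T f') F"
  using bounded_linear.has_derivative[OF assms(1) assms(2)[unfolded has_vector_derivative_def]]
  unfolding has_vector_derivative_def by (simp add: linear_scale[OF bounded_linear.linear[OF assms(1)]])

(* ---- Heis ---- *)
definition hL :: "real \<times> real \<times> real \<Rightarrow> real \<times> real \<times> real \<Rightarrow> real \<times> real \<times> real" where
  "hL p q = (fst q, fst (snd q), snd (snd q) + (fst p * fst (snd q) - fst q * fst (snd p)) / 2)"

lemma heis_aff: "heis_mult p q = p + hL p q"
  by (cases p; cases q) (simp add: heis_mult_def hL_def)

lemma hL_bl: "bounded_linear (hL p)"
  unfolding linear_conv_bounded_linear[symmetric]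
  by (rule linearI) (auto simp: hL_def algebra_simps add_divide_distrib diff_divide_distrib)

lemma heis_ops_unique:
  assumes "one_param_subgroup heis_mult (0, 0, 0) A \<gamma>"
  shows "\<gamma> = (\<lambda>t. t *\<^sub>R A)"
proof -
  have g0: "\<gamma> 0 = 0" and gadd: "\<And>s t. \<gamma> (s + t) = heis_mult (\<gamma> s) (\<gamma> t)"
    and gd: "(\<gamma> has_vector_derivative A) (at 0)"
    using assms unfolding one_param_subgroup_def by (auto simp: zero_prod_def)
  have gds: "(\<gamma> has_vector_derivative hL (\<gamma> s) A) (at s)" for s
  proof (rule shift_vd)
    have "((\<lambda>h. \<gamma> s + hL (\<gamma> s) (\<gamma> h)) has_vector_derivative 0 + hL (\<gamma> s) A) (at 0)"
      by (intro has_vector_derivative_add has_vector_derivative_const lin_vd[OF hL_bl gd])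
    then show "((\<lambda>h. \<gamma> (s + h)) has_vector_derivative hL (\<gamma> s) A) (at 0)"
      by (simp add: gadd heis_aff)
  qed
  have cfst: "((\<lambda>s. fst (\<gamma> s)) has_vector_derivative fst A) (at s)" for s
    using lin_vd[OF bounded_linear_fst gds[of s]] by (simp add: hL_def)
  have csnd: "((\<lambda>s. fst (snd (\<gamma> s))) has_vector_derivative fst (snd A)) (at s)" for s
    using lin_vd[OF bounded_linear_compose[OF bounded_linear_fst bounded_linear_snd] gds[of s]]
    by (simp add: hL_def)
  have X: "fst (\<gamma> s) = s * fst A" for s
  proof -
    have "\<forall>x. DERIV (\<lambda>s. fst (\<gamma> s) - s * fst A) x :> 0"
      using cfst unfolding has_real_derivative_iff_has_vector_derivative[symmetric]
      by (auto intro!: derivative_eq_intros)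
    from DERIV_isconst_all[OF this, of s 0] show ?thesis using g0 by simp
  qed
  have Y: "fst (snd (\<gamma> s)) = s * fst (snd A)" for s
  proof -
    have "\<forall>x. DERIV (\<lambda>s. fst (snd (\<gamma> s)) - s * fst (snd A)) x :> 0"
      using csnd unfolding has_real_derivative_iff_has_vector_derivative[symmetric]
      by (auto intro!: derivative_eq_intros)
    from DERIV_isconst_all[OF this, of s 0] show ?thesis using g0 by simp
  qed
  have Z: "snd (snd (\<gamma> s)) = s * snd (snd A)" for s
  proof -
    have *: "\<And>x. ((\<lambda>s. snd (snd (\<gamma> s))) has_vector_derivative snd (snd A)) (at x)"
      using lin_vd[OF bounded_linear_compose[OF bounded_linear_snd bounded_linear_snd] gds]
      by (simp add: hL_def X Y)
    have "\<forall>x. DERIV (\<lambda>s. snd (snd (\<gamma> s)) - s * snd (snd A)) x :> 0"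
      using * unfolding has_real_derivative_iff_has_vector_derivative[symmetric]
      by (auto intro!: derivative_eq_intros)
    from DERIV_isconst_all[OF this, of s 0] show ?thesis using g0 by simp
  qed
  show ?thesis
    by (rule ext) (simp add: prod_eq_iff X Y Z)
qed

lemma heis_ops: "one_param_subgroup heis_mult (0, 0, 0) A (\<lambda>t. t *\<^sub>R A)"
  unfolding one_param_subgroup_def
  by (cases A) (auto simp: heis_mult_def algebra_simps intro!: derivative_eq_intros)

lemma heis_gexp: "gexp heis_mult (0, 0, 0) A = A"
proof -
  have "(THE \<gamma>. one_param_subgroup heis_mult (0, 0, 0) A \<gamma>) = (\<lambda>t. t *\<^sub>R A)"
    using heis_ops heis_ops_unique by blast
  then show ?thesis unfolding gexp_def by simp
qed


definition hV :: "real \<times> real \<times> real \<Rightarrow> real \<times> real \<times> real \<Rightarrow> real \<times> real \<times> real" where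
  "hV A p = hL p A"

definition hDV :: "real \<times> real \<times> real \<Rightarrow> real \<times> real \<times> real \<Rightarrow> real \<times> real \<times> real \<Rightarrow> real \<times> real \<times> real" where
  "hDV A p w = (0, 0, (fst w * fst (snd A) - fst A * fst (snd w)) / 2)"

lemma heis_h1: "((\<lambda>t. heis_mult p (gexp heis_mult (0, 0, 0) (t *\<^sub>R (x *\<^sub>R (1, 0, 0) + y *\<^sub>R (0, 1, 0)))))
   has_vector_derivative hV (x *\<^sub>R (1, 0, 0) + y *\<^sub>R (0, 1, 0)) p) (at 0)"
proof -
  let ?B = "x *\<^sub>R (1::real, 0::real, 0::real) + y *\<^sub>R (0, 1, 0)"
  have eq: "(\<lambda>t. heis_mult p (gexp heis_mult (0, 0, 0) (t *\<^sub>R ?B))) = (\<lambda>t. p + t *\<^sub>R hV ?B p)"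
    by (rule ext) (simp add: heis_gexp heis_aff hV_def hL_def algebra_simps diff_divide_distrib)
  show ?thesis
    unfolding eq by (auto intro!: derivative_eq_intros)
qed

lemma heis_h2: "heis_mult p (gexp heis_mult (0, 0, 0) 0) = p"
  by (cases p) (simp add: heis_gexp heis_mult_def zero_prod_def)

lemma heis_h3: "gexp heis_mult (0, 0, 0) ((s + t) *\<^sub>R (x *\<^sub>R (1::real, 0::real, 0::real) + y *\<^sub>R (0, 1, 0))) =
        heis_mult (gexp heis_mult (0, 0, 0) (s *\<^sub>R (x *\<^sub>R (1, 0, 0) + y *\<^sub>R (0, 1, 0))))
         (gexp heis_mult (0, 0, 0) (t *\<^sub>R (x *\<^sub>R (1, 0, 0) + y *\<^sub>R (0, 1, 0))))"
  by (simp add: heis_gexp heis_mult_def algebra_simps)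

lemma heis_h4: "linear (\<lambda>A. hV A p)"
  by (rule linearI) (auto simp: hV_def hL_def algebra_simps add_divide_distrib diff_divide_distrib)

lemma heis_h5: "(hV A has_derivative hDV A p) (at p)"
  unfolding hV_def[abs_def] hL_def hDV_def[abs_def]
  by (auto intro!: derivative_eq_intros simp: algebra_simps diff_divide_distrib)

lemma heis_h6: "hDV (0, 1, 0) p (hV (1, 0, 0) p) - hDV (1, 0, 0) p (hV (0, 1, 0) p) = hV (0, 0, 1) p"
  by (simp add: hDV_def hV_def hL_def)

lemma heis_lg: "lg heis_mult (0, 0, 0) hV hDV (1, 0, 0) (0, 1, 0) (0, 0, 1)"
  unfolding lg_def using heis_h1 heis_h2 heis_h3 heis_h4 heis_h5 heis_h6 by blast

lemma heis_Phi: "Phi heis_mult (0, 0, 0) (1, 0, 0) (0, 1, 0) r \<theta> = (r * cos \<theta>, r * sin \<theta>, 0)"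
  by (simp add: Phi_def heis_gexp)

lemma heis_polar: "Delta0_polar_formula heis_mult (0, 0, 0) (1, 0, 0) (0, 1, 0) {0<..} (\<lambda>r. 2 / r)"
proof (rule lg.polar[OF heis_lg, where \<alpha>="\<lambda>r \<theta>. - r * sin \<theta>" and \<beta>="\<lambda>r \<theta>. r * cos \<theta>" and \<gamma>="\<lambda>r \<theta>. - r\<^sup>2 / 2"])
  show "open {0::real<..}" by simp
next
  fix r \<theta> :: real assume r: "r \<in> {0<..}"
  show "- r\<^sup>2 / 2 \<noteq> 0" using r by simp
  show "(- r * sin \<theta> * sin \<theta> - r * cos \<theta> * cos \<theta>) / (- r\<^sup>2 / 2) = 2 / r"
  proof -
    have "- r * sin \<theta> * sin \<theta> - r * cos \<theta> * cos \<theta> = - r * ((sin \<theta>)\<^sup>2 + (cos \<theta>)\<^sup>2)"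
      by algebra
    then have nn: "- r * sin \<theta> * sin \<theta> - r * cos \<theta> * cos \<theta> = - r" by simp
    show ?thesis unfolding nn using r by (simp add: power2_eq_square field_simps)
  qed
  have d1: "((\<lambda>\<theta>. r * cos \<theta>) has_vector_derivative - r * sin \<theta>) (at \<theta>)"
    unfolding has_real_derivative_iff_has_vector_derivative[symmetric]
    by (auto intro!: derivative_eq_intros)
  have d2: "((\<lambda>\<theta>. r * sin \<theta>) has_vector_derivative r * cos \<theta>) (at \<theta>)"
    unfolding has_real_derivative_iff_has_vector_derivative[symmetric]
    by (auto intro!: derivative_eq_intros)
  have d: "((\<lambda>\<theta>. (r * cos \<theta>, r * sin \<theta>, 0::real)) has_vector_derivative (- r * sin \<theta>, r * cos \<theta>, 0)) (at \<theta>)"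
    by (intro has_vector_derivative_Pair d1 d2 has_vector_derivative_const)
  have eq: "(- r * sin \<theta>) *\<^sub>R hV (1, 0, 0) (r * cos \<theta>, r * sin \<theta>, 0) + (r * cos \<theta>) *\<^sub>R hV (0, 1, 0) (r * cos \<theta>, r * sin \<theta>, 0)
      + (- r\<^sup>2 / 2) *\<^sub>R hV (0, 0, 1) (r * cos \<theta>, r * sin \<theta>, 0) = (- r * sin \<theta>, r * cos \<theta>, 0)"
  proof -
    have "r * (r * (cos \<theta> * cos \<theta>)) + r * (r * (sin \<theta> * sin \<theta>)) = r * r * ((sin \<theta>)\<^sup>2 + (cos \<theta>)\<^sup>2)"
      by algebra
    then have k: "r * (r * (cos \<theta> * cos \<theta>)) + r * (r * (sin \<theta> * sin \<theta>)) = r * r" by simp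
    show ?thesis by (simp add: hV_def hL_def field_simps power2_eq_square k)
  qed
  show "((\<lambda>\<theta>. Phi heis_mult (0, 0, 0) (1, 0, 0) (0, 1, 0) r \<theta>) has_vector_derivative
        (- r * sin \<theta>) *\<^sub>R hV (1, 0, 0) (Phi heis_mult (0, 0, 0) (1, 0, 0) (0, 1, 0) r \<theta>) +
        (r * cos \<theta>) *\<^sub>R hV (0, 1, 0) (Phi heis_mult (0, 0, 0) (1, 0, 0) (0, 1, 0) r \<theta>) +
        (- r\<^sup>2 / 2) *\<^sub>R hV (0, 0, 1) (Phi heis_mult (0, 0, 0) (1, 0, 0) (0, 1, 0) r \<theta>)) (at \<theta>)"
    unfolding heis_Phi eq by (rule d)
qed

lemma heis_gen: "half_Delta0_is_generator heis_mult (0, 0, 0) (1, 0, 0) (0, 1, 0) {0<..} bessel3_gen"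
  by (rule half_gen[OF heis_polar]) (simp add: bessel3_gen_def)

(* ---- Mat ---- *)
lemma mm_scaleR_left: "((c::real) *\<^sub>R A) ** (B :: 'a::real_algebra_1 ^ 'n ^ 'm) = c *\<^sub>R (A ** B)"
  by (simp add: matrix_matrix_mult_def vec_eq_iff scaleR_sum_right)

lemma mm_scaleR_right: "(A :: 'a::real_algebra_1 ^ 'n ^ 'm) ** ((c::real) *\<^sub>R B) = c *\<^sub>R (A ** B)"
  by (simp add: matrix_matrix_mult_def vec_eq_iff scaleR_sum_right)

lemma mm_add_right: "((A :: 'a::semiring_1 ^ 'n ^ 'm) + B) ** C = A ** C + B ** C"
  by (simp add: matrix_matrix_mult_def vec_eq_iff sum.distrib distrib_right)

lemma mm_bilinear: "bounded_bilinear ((**) :: 'a::{real_normed_field,euclidean_space} ^ 'n ^ 'n \<Rightarrow> _ \<Rightarrow> _)"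
proof -
  have "bilinear ((**) :: 'a ^ 'n ^ 'n \<Rightarrow> _ \<Rightarrow> _)"
    unfolding bilinear_def
    by (auto intro!: linearI simp: matrix_add_ldistrib mm_add_right mm_scaleR_left mm_scaleR_right)
  then show ?thesis by (simp add: bilinear_conv_bounded_bilinear)
qed


lemma mm_ops_deriv:
  fixes \<gamma> :: "real \<Rightarrow> 'a::{real_normed_field,euclidean_space} ^ 'n ^ 'n"
  assumes "one_param_subgroup (**) (mat 1) A \<gamma>"
  shows "(\<gamma> has_vector_derivative \<gamma> s ** A) (at s)" "(\<gamma> has_vector_derivative A ** \<gamma> s) (at s)"
proof -
  have g0: "\<gamma> 0 = mat 1" and gadd: "\<And>s t. \<gamma> (s + t) = \<gamma> s ** \<gamma> t"
    and gd: "(\<gamma> has_vector_derivative A) (at 0)"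
    using assms unfolding one_param_subgroup_def by auto
  show "(\<gamma> has_vector_derivative \<gamma> s ** A) (at s)"
  proof (rule shift_vd)
    show "((\<lambda>h. \<gamma> (s + h)) has_vector_derivative \<gamma> s ** A) (at 0)"
      unfolding gadd by (rule lin_vd[OF bounded_bilinear.bounded_linear_right[OF mm_bilinear] gd])
  qed
  show "(\<gamma> has_vector_derivative A ** \<gamma> s) (at s)"
  proof (rule shift_vd)
    have "\<gamma> (s + h) = \<gamma> h ** \<gamma> s" for h using gadd[of h s] by (simp add: add.commute)
    then show "((\<lambda>h. \<gamma> (s + h)) has_vector_derivative A ** \<gamma> s) (at 0)"
      using lin_vd[OF bounded_bilinear.bounded_linear_left[OF mm_bilinear] gd, of "\<gamma> s"] by simp
  qed
qed

lemma mm_ops_unique: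
  fixes \<gamma> \<eta> :: "real \<Rightarrow> 'a::{real_normed_field,euclidean_space} ^ 'n ^ 'n"
  assumes g: "one_param_subgroup (**) (mat 1) A \<gamma>" and h: "one_param_subgroup (**) (mat 1) A \<eta>"
  shows "\<gamma> = \<eta>"
proof -
  have g0: "\<gamma> 0 = mat 1" and gadd: "\<And>s t. \<gamma> (s + t) = \<gamma> s ** \<gamma> t"
    using g unfolding one_param_subgroup_def by auto
  have h0: "\<eta> 0 = mat 1" and hadd: "\<And>s t. \<eta> (s + t) = \<eta> s ** \<eta> t"
    using h unfolding one_param_subgroup_def by auto
  define \<delta> where "\<delta> s = \<gamma> s ** \<eta> (- s)" for s
  have hm: "((\<lambda>s. \<eta> (- s)) has_vector_derivative - (A ** \<eta> (- s))) (at s)" for s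
  proof -
    have l: "((\<lambda>s. - s) has_vector_derivative -1) (at s)" by (auto intro!: derivative_eq_intros)
    have "((\<eta> \<circ> (\<lambda>s. - s)) has_vector_derivative (-1) *\<^sub>R (A ** \<eta> (- s))) (at s)"
      by (rule vector_diff_chain_at[OF l]) (use mm_ops_deriv(2)[OF h] in simp)
    then show ?thesis by (simp add: comp_def)
  qed
  have dd: "(\<delta> has_derivative (\<lambda>h. 0)) (at s within UNIV)" for s
  proof -
    have "((\<lambda>s. \<gamma> s ** \<eta> (- s)) has_derivative
        (\<lambda>x. \<gamma> s ** (x *\<^sub>R - (A ** \<eta> (- s))) + (x *\<^sub>R (\<gamma> s ** A)) ** \<eta> (- s))) (at s)"
      using bounded_bilinear.FDERIV[OF mm_bilinear,
          OF mm_ops_deriv(1)[OF g, of s, unfolded has_vector_derivative_def]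
             hm[of s, unfolded has_vector_derivative_def]] .
    moreover have "(\<lambda>x. \<gamma> s ** (x *\<^sub>R - (A ** \<eta> (- s))) + (x *\<^sub>R (\<gamma> s ** A)) ** \<eta> (- s)) = (\<lambda>h. 0)"
      by (rule ext) (simp add: mm_scaleR_left mm_scaleR_right matrix_mul_assoc
          bounded_bilinear.minus_right[OF mm_bilinear])
    ultimately show ?thesis unfolding \<delta>_def by simp
  qed
  obtain c where c: "\<And>s. \<delta> s = c"
    using has_derivative_zero_constant[of UNIV \<delta>, OF convex_UNIV dd] by blast
  have dc: "\<delta> s = mat 1" for s using c[of s] c[of 0] by (simp add: \<delta>_def g0 h0)
  show ?thesis
  proof
    fix s
    have "\<eta> (- s) ** \<eta> s = mat 1" using hadd[of "- s" s] h0 by simp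
    then have "\<gamma> s = (\<gamma> s ** \<eta> (- s)) ** \<eta> s" by (simp add: matrix_mul_assoc[symmetric])
    also have "\<dots> = \<eta> s" using dc[of s] by (simp add: \<delta>_def)
    finally show "\<gamma> s = \<eta> s" .
  qed
qed

lemma mm_gexp:
  fixes \<eta> :: "real \<Rightarrow> 'a::{real_normed_field,euclidean_space} ^ 'n ^ 'n"
  assumes h: "one_param_subgroup (**) (mat 1) B \<eta>"
  shows "gexp (**) (mat 1) (t *\<^sub>R B) = \<eta> t"
proof -
  have h0: "\<eta> 0 = mat 1" and hadd: "\<And>s t. \<eta> (s + t) = \<eta> s ** \<eta> t"
    and hd: "(\<eta> has_vector_derivative B) (at 0)"
    using h unfolding one_param_subgroup_def by auto
  have ops: "one_param_subgroup (**) (mat 1) (t *\<^sub>R B) (\<lambda>s. \<eta> (t * s))"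
    unfolding one_param_subgroup_def
  proof (intro conjI allI)
    show "\<eta> (t * 0) = mat 1" using h0 by simp
    show "\<eta> (t * (s + s')) = \<eta> (t * s) ** \<eta> (t * s')" for s s'
      using hadd[of "t * s" "t * s'"] by (simp add: distrib_left)
    have l: "((\<lambda>s. t * s) has_vector_derivative t) (at 0)" by (auto intro!: derivative_eq_intros)
    have "((\<eta> \<circ> (\<lambda>s. t * s)) has_vector_derivative t *\<^sub>R B) (at 0)"
      by (rule vector_diff_chain_at[OF l]) (simp add: hd)
    then show "((\<lambda>s. \<eta> (t * s)) has_vector_derivative t *\<^sub>R B) (at 0)" by (simp add: comp_def)
  qed
  have "(THE \<gamma>. one_param_subgroup (**) (mat 1) (t *\<^sub>R B) \<gamma>) = (\<lambda>s. \<eta> (t * s))"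
    using ops mm_ops_unique by blast
  then show ?thesis unfolding gexp_def by simp
qed


locale mat2 =
  fixes A1 A2 :: "'a::{real_normed_field,euclidean_space} ^ 'n ^ 'n" and lam :: real
    and C S :: "real \<Rightarrow> real"
  assumes r1: "A1 ** A1 = lam *\<^sub>R mat 1" and r2: "A2 ** A2 = lam *\<^sub>R mat 1"
    and r3: "A2 ** A1 = - (A1 ** A2)"
    and C_add: "\<And>s t. C (s + t) = C s * C t + lam * S s * S t"
    and S_add: "\<And>s t. S (s + t) = S s * C t + C s * S t"
    and C0: "C 0 = 1" and S0: "S 0 = 0"
    and dC: "\<And>t. DERIV C t :> lam * S t" and dS: "\<And>t. DERIV S t :> C t"
    and pyth: "\<And>t. (C t)\<^sup>2 - lam * (S t)\<^sup>2 = 1"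
begin

definition Q :: "real \<Rightarrow> real \<Rightarrow> real \<Rightarrow> real \<Rightarrow> 'a ^ 'n ^ 'n" where
  "Q a b c d = a *\<^sub>R mat 1 + b *\<^sub>R A1 + c *\<^sub>R A2 + d *\<^sub>R (A1 ** A2)"

lemma neg_left: "(- X) ** Y = - (X ** Y)" for X Y :: "'a ^ 'n ^ 'n"
  using mm_scaleR_left[of "-1" X Y] by simp

lemma neg_right: "X ** (- Y) = - (X ** Y)" for X Y :: "'a ^ 'n ^ 'n"
  using mm_scaleR_right[of X "-1" Y] by simp

lemma basis_prods:
  "A1 ** (A1 ** A2) = lam *\<^sub>R A2"
  "(A1 ** A2) ** A1 = - (lam *\<^sub>R A2)"
  "A2 ** (A1 ** A2) = - (lam *\<^sub>R A1)"
  "(A1 ** A2) ** A2 = lam *\<^sub>R A1"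
  "(A1 ** A2) ** (A1 ** A2) = - ((lam * lam) *\<^sub>R mat 1)"
proof -
  show a: "A1 ** (A1 ** A2) = lam *\<^sub>R A2"
    by (simp add: matrix_mul_assoc r1 mm_scaleR_left)
  show b: "(A1 ** A2) ** A1 = - (lam *\<^sub>R A2)"
    by (simp add: matrix_mul_assoc[symmetric] r3 neg_right a)
  have "(A1 ** A2) ** A2 = A1 ** (A2 ** A2)" by (rule matrix_mul_assoc[symmetric])
  then show d: "(A1 ** A2) ** A2 = lam *\<^sub>R A1"
    by (simp add: r2 mm_scaleR_right)
  show c: "A2 ** (A1 ** A2) = - (lam *\<^sub>R A1)"
    by (simp add: matrix_mul_assoc r3 neg_left d)
  show "(A1 ** A2) ** (A1 ** A2) = - ((lam * lam) *\<^sub>R mat 1)"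
    by (simp add: matrix_mul_assoc b neg_left mm_scaleR_left r2 mm_scaleR_right)
qed

lemma Q_mult:
  "Q a b c d ** Q a' b' c' d' =
   Q (a * a' + lam * b * b' + lam * c * c' - lam * lam * d * d')
     (a * b' + b * a' - lam * c * d' + lam * d * c')
     (a * c' + c * a' + lam * b * d' - lam * d * b')
     (a * d' + d * a' + b * c' - c * b')"
  unfolding Q_def
  by (simp add: matrix_add_ldistrib mm_add_right mm_scaleR_left mm_scaleR_right
      r1 r2 r3 basis_prods algebra_simps)


lemma Q_vd:
  assumes "DERIV f1 t :> f1'" "DERIV f2 t :> f2'" "DERIV f3 t :> f3'" "DERIV f4 t :> f4'"
  shows "((\<lambda>t. Q (f1 t) (f2 t) (f3 t) (f4 t)) has_vector_derivative Q f1' f2' f3' f4') (at t)"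
proof -
  have "((\<lambda>t. f1 t *\<^sub>R mat 1 + f2 t *\<^sub>R A1 + f3 t *\<^sub>R A2 + f4 t *\<^sub>R (A1 ** A2)) has_vector_derivative
      (f1 t *\<^sub>R 0 + f1' *\<^sub>R mat 1) + (f2 t *\<^sub>R 0 + f2' *\<^sub>R A1) + (f3 t *\<^sub>R 0 + f3' *\<^sub>R A2)
       + (f4 t *\<^sub>R 0 + f4' *\<^sub>R (A1 ** A2))) (at t)"
    by (intro has_vector_derivative_add has_vector_derivative_scaleR assms has_vector_derivative_const)
  then show ?thesis unfolding Q_def by simp
qed

lemma Q_cong: "a = a' \<Longrightarrow> b = b' \<Longrightarrow> c = c' \<Longrightarrow> d = d' \<Longrightarrow> Q a b c d = Q a' b' c' d'"
  by simp

definition eta :: "real \<Rightarrow> real \<Rightarrow> real \<Rightarrow> 'a ^ 'n ^ 'n" where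
  "eta x y t = Q (C t) (x * S t) (y * S t) 0"

lemma eta_ops:
  assumes xy: "x\<^sup>2 + y\<^sup>2 = 1"
  shows "one_param_subgroup (**) (mat 1) (x *\<^sub>R A1 + y *\<^sub>R A2) (eta x y)"
  unfolding one_param_subgroup_def
proof (intro conjI allI)
  show "eta x y 0 = mat 1" by (simp add: eta_def Q_def C0 S0)
  fix s t
  show "eta x y (s + t) = eta x y s ** eta x y t"
    unfolding eta_def Q_mult
  proof (rule Q_cong)
    have "C s * C t + lam * (x * S s) * (x * S t) + lam * (y * S s) * (y * S t) - lam * lam * 0 * 0
        = C s * C t + lam * S s * S t * (x\<^sup>2 + y\<^sup>2)"
      by (simp add: algebra_simps power2_eq_square)
    then show "C (s + t) = C s * C t + lam * (x * S s) * (x * S t) + lam * (y * S s) * (y * S t) - lam * lam * 0 * 0"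
      using xy by (simp add: C_add)
    show "x * S (s + t) = C s * (x * S t) + x * S s * C t - lam * (y * S s) * 0 + lam * 0 * (y * S t)"
      by (simp add: S_add algebra_simps)
    show "y * S (s + t) = C s * (y * S t) + y * S s * C t + lam * (x * S s) * 0 - lam * 0 * (x * S t)"
      by (simp add: S_add algebra_simps)
    show "0 = C s * 0 + 0 * C t + x * S s * (y * S t) - y * S s * (x * S t)"
      by simp
  qed
next
  have "((\<lambda>t. Q (C t) (x * S t) (y * S t) 0) has_vector_derivative Q (lam * S 0) (x * C 0) (y * C 0) 0) (at 0)"
    by (intro Q_vd dC DERIV_cmult dS DERIV_const)
  then show "(eta x y has_vector_derivative x *\<^sub>R A1 + y *\<^sub>R A2) (at 0)"
    unfolding eta_def[abs_def] by (simp add: C0 S0 Q_def)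
qed

lemma gexp_eta: "x\<^sup>2 + y\<^sup>2 = 1 \<Longrightarrow> gexp (**) (mat 1) (t *\<^sub>R (x *\<^sub>R A1 + y *\<^sub>R A2)) = eta x y t"
  by (rule mm_gexp[OF eta_ops])

lemma gexp0: "gexp (**) (mat 1) (0 :: 'a ^ 'n ^ 'n) = mat 1"
  using gexp_eta[of 1 0 0] by (simp add: eta_def Q_def C0 S0)

lemma is_lg: "lg (**) (mat 1) (\<lambda>A p. p ** A) (\<lambda>A p w. w ** A) A1 A2 (A1 ** A2 - A2 ** A1)"
proof -
  have h1: "((\<lambda>t. p ** gexp (**) (mat 1) (t *\<^sub>R (x *\<^sub>R A1 + y *\<^sub>R A2))) has_vector_derivative
      p ** (x *\<^sub>R A1 + y *\<^sub>R A2)) (at 0)" if xy: "x\<^sup>2 + y\<^sup>2 = 1" for p :: "'a ^ 'n ^ 'n" and x y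
    unfolding gexp_eta[OF xy]
    by (rule lin_vd[OF bounded_bilinear.bounded_linear_right[OF mm_bilinear]])
      (use eta_ops[OF xy] in \<open>simp add: one_param_subgroup_def\<close>)
  have h2: "p ** gexp (**) (mat 1) 0 = p" for p :: "'a ^ 'n ^ 'n" by (simp add: gexp0)
  have h3: "gexp (**) (mat 1) ((s + t) *\<^sub>R (x *\<^sub>R A1 + y *\<^sub>R A2)) =
      gexp (**) (mat 1) (s *\<^sub>R (x *\<^sub>R A1 + y *\<^sub>R A2)) ** gexp (**) (mat 1) (t *\<^sub>R (x *\<^sub>R A1 + y *\<^sub>R A2))"
    if xy: "x\<^sup>2 + y\<^sup>2 = 1" for x y s t
    unfolding gexp_eta[OF xy] using eta_ops[OF xy] by (simp add: one_param_subgroup_def)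
  have h4: "linear (\<lambda>A. p ** A)" for p :: "'a ^ 'n ^ 'n"
    using bounded_linear.linear[OF bounded_bilinear.bounded_linear_right[OF mm_bilinear]] .
  have h5: "((\<lambda>p. p ** A) has_derivative (\<lambda>w. w ** A)) (at p)" for A p :: "'a ^ 'n ^ 'n"
    using bounded_linear_imp_has_derivative[OF bounded_bilinear.bounded_linear_left[OF mm_bilinear]] .
  have h6: "(p ** A1) ** A2 - (p ** A2) ** A1 = p ** (A1 ** A2 - A2 ** A1)" for p :: "'a ^ 'n ^ 'n"
    by (simp add: matrix_mul_assoc bounded_bilinear.diff_right[OF mm_bilinear])
  show ?thesis unfolding lg_def using h1 h2 h3 h4 h5 h6 by blast
qed

lemma Phi_eta: "Phi (**) (mat 1) A1 A2 r \<theta> = eta (cos \<theta>) (sin \<theta>) r"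
  unfolding Phi_scale by (rule gexp_eta) simp

lemma polar_mat:
  assumes I: "open I" and Snz: "\<And>r. r \<in> I \<Longrightarrow> S r \<noteq> 0"
  shows "Delta0_polar_formula (**) (mat 1) A1 A2 I (\<lambda>r. 2 * C r / S r)"
proof (rule lg.polar[OF is_lg I, where \<alpha>="\<lambda>r \<theta>. - C r * S r * sin \<theta>" and \<beta>="\<lambda>r \<theta>. C r * S r * cos \<theta>"
      and \<gamma>="\<lambda>r \<theta>. - (S r)\<^sup>2 / 2"])
  fix r \<theta> assume r: "r \<in> I"
  show "- (S r)\<^sup>2 / 2 \<noteq> 0" using Snz[OF r] by simp
  show "(- C r * S r * sin \<theta> * sin \<theta> - C r * S r * cos \<theta> * cos \<theta>) / (- (S r)\<^sup>2 / 2) = 2 * C r / S r"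
  proof -
    have "- C r * S r * sin \<theta> * sin \<theta> - C r * S r * cos \<theta> * cos \<theta> = - C r * S r * ((sin \<theta>)\<^sup>2 + (cos \<theta>)\<^sup>2)"
      by algebra
    then have nn: "- C r * S r * sin \<theta> * sin \<theta> - C r * S r * cos \<theta> * cos \<theta> = - C r * S r" by simp
    show ?thesis unfolding nn using Snz[OF r] by (simp add: field_simps power2_eq_square)
  qed
  let ?p = "Phi (**) (mat 1) A1 A2 r \<theta>"
  have d: "((\<lambda>\<theta>. Phi (**) (mat 1) A1 A2 r \<theta>) has_vector_derivative Q 0 (- sin \<theta> * S r) (cos \<theta> * S r) 0) (at \<theta>)"
    unfolding Phi_eta eta_def
    by (intro Q_vd DERIV_const) (auto intro!: derivative_eq_intros)
  have e1: "(- C r * S r * sin \<theta>) *\<^sub>R (?p ** A1) + (C r * S r * cos \<theta>) *\<^sub>R (?p ** A2)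
      + (- (S r)\<^sup>2 / 2) *\<^sub>R (?p ** (A1 ** A2 - A2 ** A1))
      = ?p ** Q 0 (- C r * S r * sin \<theta>) (C r * S r * cos \<theta>) (- (S r)\<^sup>2)"
    by (simp add: Q_def matrix_add_ldistrib mm_scaleR_right r3 bounded_bilinear.diff_right[OF mm_bilinear]
        algebra_simps scaleR_2[symmetric])
  have e2: "?p ** Q 0 (- C r * S r * sin \<theta>) (C r * S r * cos \<theta>) (- (S r)\<^sup>2) = Q 0 (- sin \<theta> * S r) (cos \<theta> * S r) 0"
    unfolding Phi_eta eta_def Q_mult
  proof (rule Q_cong)
    show "C r * 0 + lam * (cos \<theta> * S r) * (- C r * S r * sin \<theta>) + lam * (sin \<theta> * S r) * (C r * S r * cos \<theta>) - lam * lam * 0 * - (S r)\<^sup>2 = 0"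
      by (simp add: algebra_simps)
    have "C r * (- C r * S r * sin \<theta>) + cos \<theta> * S r * 0 - lam * (sin \<theta> * S r) * - (S r)\<^sup>2 + lam * 0 * (C r * S r * cos \<theta>)
        = - sin \<theta> * S r * ((C r)\<^sup>2 - lam * (S r)\<^sup>2)" by algebra
    then show "C r * (- C r * S r * sin \<theta>) + cos \<theta> * S r * 0 - lam * (sin \<theta> * S r) * - (S r)\<^sup>2 + lam * 0 * (C r * S r * cos \<theta>) = - sin \<theta> * S r"
      by (simp add: pyth)
    have "C r * (C r * S r * cos \<theta>) + sin \<theta> * S r * 0 + lam * (cos \<theta> * S r) * - (S r)\<^sup>2 - lam * 0 * (- C r * S r * sin \<theta>)
        = cos \<theta> * S r * ((C r)\<^sup>2 - lam * (S r)\<^sup>2)" by algebra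
    then show "C r * (C r * S r * cos \<theta>) + sin \<theta> * S r * 0 + lam * (cos \<theta> * S r) * - (S r)\<^sup>2 - lam * 0 * (- C r * S r * sin \<theta>) = cos \<theta> * S r"
      by (simp add: pyth)
    have "C r * - (S r)\<^sup>2 + 0 * 0 + cos \<theta> * S r * (C r * S r * cos \<theta>) - sin \<theta> * S r * (- C r * S r * sin \<theta>)
        = C r * (S r)\<^sup>2 * ((sin \<theta>)\<^sup>2 + (cos \<theta>)\<^sup>2 - 1)" by algebra
    then show "C r * - (S r)\<^sup>2 + 0 * 0 + cos \<theta> * S r * (C r * S r * cos \<theta>) - sin \<theta> * S r * (- C r * S r * sin \<theta>) = 0"
      by simp
  qed
  show "((\<lambda>\<theta>. Phi (**) (mat 1) A1 A2 r \<theta>) has_vector_derivative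
        (- C r * S r * sin \<theta>) *\<^sub>R (?p ** A1) + (C r * S r * cos \<theta>) *\<^sub>R (?p ** A2)
      + (- (S r)\<^sup>2 / 2) *\<^sub>R (?p ** (A1 ** A2 - A2 ** A1))) (at \<theta>)"
    unfolding e1 e2 by (rule d)
qed

end

(* ---- Fin ---- *)
lemma su_r1: "cscale (complex_of_real k * \<i>) pauli1 ** cscale (complex_of_real k * \<i>) pauli1 = (- k\<^sup>2) *\<^sub>R mat 1"
  by (simp add: vec_eq_iff forall_2 matrix_matrix_mult_def sum_2 cscale_def pauli1_def cmat_def mat_def
      complex_eq_iff power2_eq_square)

lemma su_r2: "cscale (complex_of_real k * \<i>) pauli2 ** cscale (complex_of_real k * \<i>) pauli2 = (- k\<^sup>2) *\<^sub>R mat 1"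
  by (simp add: vec_eq_iff forall_2 matrix_matrix_mult_def sum_2 cscale_def pauli2_def cmat_def mat_def
      complex_eq_iff power2_eq_square)

lemma su_r3: "cscale (complex_of_real k * \<i>) pauli2 ** cscale (complex_of_real k * \<i>) pauli1 =
   - (cscale (complex_of_real k * \<i>) pauli1 ** cscale (complex_of_real k * \<i>) pauli2)"
  by (simp add: vec_eq_iff forall_2 matrix_matrix_mult_def sum_2 cscale_def pauli1_def pauli2_def cmat_def)

lemma sl_r1: "(k *\<^sub>R rmat 1 0 0 (-1)) ** (k *\<^sub>R rmat 1 0 0 (-1)) = k\<^sup>2 *\<^sub>R mat 1"
  by (simp add: vec_eq_iff forall_2 matrix_matrix_mult_def sum_2 rmat_def mat_def power2_eq_square)

lemma sl_r2: "(k *\<^sub>R rmat 0 1 1 0) ** (k *\<^sub>R rmat 0 1 1 0) = k\<^sup>2 *\<^sub>R mat 1"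
  by (simp add: vec_eq_iff forall_2 matrix_matrix_mult_def sum_2 rmat_def mat_def power2_eq_square)

lemma sl_r3: "(k *\<^sub>R rmat 0 1 1 0) ** (k *\<^sub>R rmat 1 0 0 (-1)) = - ((k *\<^sub>R rmat 1 0 0 (-1)) ** (k *\<^sub>R rmat 0 1 1 0))"
  by (simp add: vec_eq_iff forall_2 matrix_matrix_mult_def sum_2 rmat_def)


lemma su_mat2:
  assumes k: "k > 0"
  shows "mat2 (cscale (complex_of_real k * \<i>) pauli1) (cscale (complex_of_real k * \<i>) pauli2) (- k\<^sup>2)
     (\<lambda>t. cos (k * t)) (\<lambda>t. sin (k * t) / k)"
proof -
  have a: "cos (k * (s + t)) = cos (k * s) * cos (k * t) + - k\<^sup>2 * (sin (k * s) / k) * (sin (k * t) / k)" for s t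
    using cos_add[of "k * s" "k * t"] k by (simp add: distrib_left field_simps power2_eq_square)
  have b: "sin (k * (s + t)) / k = sin (k * s) / k * cos (k * t) + cos (k * s) * (sin (k * t) / k)" for s t
    using sin_add[of "k * s" "k * t"] k by (simp add: distrib_left field_simps power2_eq_square)
  have c: "DERIV (\<lambda>t. cos (k * t)) t :> - k\<^sup>2 * (sin (k * t) / k)" for t
    using k by (auto intro!: derivative_eq_intros simp: field_simps power2_eq_square)
  have d: "DERIV (\<lambda>t. sin (k * t) / k) t :> cos (k * t)" for t
    using k by (auto intro!: derivative_eq_intros simp: field_simps power2_eq_square)
  have e: "(cos (k * t))\<^sup>2 - - k\<^sup>2 * (sin (k * t) / k)\<^sup>2 = 1" for t
    using k sin_cos_squared_add[of "k * t"] by (simp add: field_simps power2_eq_square)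
  show ?thesis unfolding mat2_def using su_r1 su_r2 su_r3 a b c d e by simp
qed

lemma sl_mat2:
  assumes k: "k > 0"
  shows "mat2 (k *\<^sub>R rmat 1 0 0 (-1)) (k *\<^sub>R rmat 0 1 1 0) (k\<^sup>2)
     (\<lambda>t. cosh (k * t)) (\<lambda>t. sinh (k * t) / k)"
proof -
  have a: "cosh (k * (s + t)) = cosh (k * s) * cosh (k * t) + k\<^sup>2 * (sinh (k * s) / k) * (sinh (k * t) / k)" for s t
    using cosh_add[of "k * s" "k * t"] k by (simp add: distrib_left field_simps power2_eq_square)
  have b: "sinh (k * (s + t)) / k = sinh (k * s) / k * cosh (k * t) + cosh (k * s) * (sinh (k * t) / k)" for s t
    using sinh_add[of "k * s" "k * t"] k by (simp add: distrib_left field_simps power2_eq_square)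
  have c: "DERIV (\<lambda>t. cosh (k * t)) t :> k\<^sup>2 * (sinh (k * t) / k)" for t
    using k by (auto intro!: derivative_eq_intros simp: field_simps power2_eq_square)
  have d: "DERIV (\<lambda>t. sinh (k * t) / k) t :> cosh (k * t)" for t
    using k by (auto intro!: derivative_eq_intros simp: field_simps power2_eq_square)
  have e: "(cosh (k * t))\<^sup>2 - k\<^sup>2 * (sinh (k * t) / k)\<^sup>2 = 1" for t
    using k cosh_square_eq[of "k * t"] by (simp add: field_simps power2_eq_square)
  show ?thesis unfolding mat2_def using sl_r1 sl_r2 sl_r3 a b c d e by simp
qed

lemma su_part:
  assumes k: "k > 0"
  shows "Delta0_polar_formula (**) (mat 1) (cscale (complex_of_real k * \<i>) pauli1) (cscale (complex_of_real k * \<i>) pauli2)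
          {0<..<pi / k} (\<lambda>r. 2 * k * cot (k * r))"
proof -
  have "Delta0_polar_formula (**) (mat 1) (cscale (complex_of_real k * \<i>) pauli1) (cscale (complex_of_real k * \<i>) pauli2)
          {0<..<pi / k} (\<lambda>r. 2 * cos (k * r) / (sin (k * r) / k))"
  proof (rule mat2.polar_mat[OF su_mat2[OF k]])
    show "open {0<..<pi / k}" by simp
    fix r assume "r \<in> {0<..<pi / k}"
    then have "0 < k * r" "k * r < pi" using k by (auto simp: field_simps)
    then have "sin (k * r) > 0" by (rule sin_gt_zero)
    then show "sin (k * r) / k \<noteq> 0" using k by simp
  qed
  moreover have "(\<lambda>r. 2 * cos (k * r) / (sin (k * r) / k)) = (\<lambda>r. 2 * k * cot (k * r))"
    by (rule ext) (simp add: cot_def field_simps)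
  ultimately show ?thesis by simp
qed

lemma sl_part:
  assumes k: "k > 0"
  shows "Delta0_polar_formula (**) (mat 1) (k *\<^sub>R rmat 1 0 0 (-1)) (k *\<^sub>R rmat 0 1 1 0)
          {0<..} (\<lambda>r. 2 * k * (cosh (k * r) / sinh (k * r)))"
proof -
  have "Delta0_polar_formula (**) (mat 1) (k *\<^sub>R rmat 1 0 0 (-1)) (k *\<^sub>R rmat 0 1 1 0)
          {0<..} (\<lambda>r. 2 * cosh (k * r) / (sinh (k * r) / k))"
  proof (rule mat2.polar_mat[OF sl_mat2[OF k]])
    show "open {0::real<..}" by simp
    fix r :: real assume "r \<in> {0<..}"
    then have r: "0 < r" by simp
    then have "0 < k * r" using k by simp
    then have "sinh (k * r) > 0" using r k by simp
    then show "sinh (k * r) / k \<noteq> 0" using k r by simp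
  qed
  moreover have "(\<lambda>r. 2 * cosh (k * r) / (sinh (k * r) / k)) = (\<lambda>r. 2 * k * (cosh (k * r) / sinh (k * r)))"
    by (rule ext) (simp add: field_simps)
  ultimately show ?thesis by simp
qed

theorem theorem1p5:
  shows
   "Delta0_polar_formula heis_mult (0, 0, 0) (1, 0, 0) (0, 1, 0) {0<..} (\<lambda>r. 2 / r) \<and>
    half_Delta0_is_generator heis_mult (0, 0, 0) (1, 0, 0) (0, 1, 0) {0<..} bessel3_gen \<and>
    (\<forall>k::real. k > 0 \<longrightarrow>
       Delta0_polar_formula (**) (mat 1) (cscale (k * \<i>) pauli1) (cscale (k * \<i>) pauli2)
          {0<..<pi / k} (\<lambda>r. 2 * k * cot (k * r)) \<and>
       half_Delta0_is_generator (**) (mat 1) (cscale (k * \<i>) pauli1) (cscale (k * \<i>) pauli2)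
          {0<..<pi / k} (legendre3_gen k)) \<and>
    (\<forall>k::real. k > 0 \<longrightarrow>
       Delta0_polar_formula (**) (mat 1) (k *\<^sub>R rmat 1 0 0 (-1)) (k *\<^sub>R rmat 0 1 1 0)
          {0<..} (\<lambda>r. 2 * k * (cosh (k * r) / sinh (k * r))) \<and>
       half_Delta0_is_generator (**) (mat 1) (k *\<^sub>R rmat 1 0 0 (-1)) (k *\<^sub>R rmat 0 1 1 0)
          {0<..} (hyp_bessel3_gen k))"
proof (intro conjI allI impI)
  show "Delta0_polar_formula heis_mult (0, 0, 0) (1, 0, 0) (0, 1, 0) {0<..} (\<lambda>r. 2 / r)"
    by (rule heis_polar)
  show "half_Delta0_is_generator heis_mult (0, 0, 0) (1, 0, 0) (0, 1, 0) {0<..} bessel3_gen"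
    by (rule heis_gen)
next
  fix k :: real assume k: "k > 0"
  show su: "Delta0_polar_formula (**) (mat 1) (cscale (k * \<i>) pauli1) (cscale (k * \<i>) pauli2)
          {0<..<pi / k} (\<lambda>r. 2 * k * cot (k * r))"
    by (rule su_part[OF k])
  show "half_Delta0_is_generator (**) (mat 1) (cscale (k * \<i>) pauli1) (cscale (k * \<i>) pauli2)
          {0<..<pi / k} (legendre3_gen k)"
    by (rule half_gen[OF su]) (simp add: legendre3_gen_def)
next
  fix k :: real assume k: "k > 0"
  show sl: "Delta0_polar_formula (**) (mat 1) (k *\<^sub>R rmat 1 0 0 (-1)) (k *\<^sub>R rmat 0 1 1 0)
          {0<..} (\<lambda>r. 2 * k * (cosh (k * r) / sinh (k * r)))"
    by (rule sl_part[OF k])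
  show "half_Delta0_is_generator (**) (mat 1) (k *\<^sub>R rmat 1 0 0 (-1)) (k *\<^sub>R rmat 0 1 1 0)
          {0<..} (hyp_bessel3_gen k)"
    by (rule half_gen[OF sl]) (simp add: hyp_bessel3_gen_def)
qed

end
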